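(* Let $\nu$ be a probability measure on $\mathrm{U}(d)$ which is a $\delta$-approximate unitary $k$-expander. Then for every $\mathcal{V}\in\mathcal{U}(d)$, every $\epsilon\in[0,2]$ and every $\Phi\in\mathcal{H}_k$ with $\int_{\mathcal{U}(d)}\mathrm{d}\mu(\mathcal{U})\,\Phi(\mathcal{U})=1$, $$\left|\int_{B(\mathcal{V},\epsilon)}\mathrm{d}\mu(\mathcal{U})(T_\nu\Phi)(\mathcal{U})-\mathrm{vol}(B(\mathcal{V},\epsilon))\right|\le\delta\sqrt{\mathrm{vol}(B(\mathcal{V},\epsilon))}\,\|\Phi\|_2 .$$
   Context: $\mathcal{U}(d)$: unitary channels on $\mathbb{C}^d$ (functions on it = phase-invariant functions on $\mathrm{U}(d)$); $\mu$ the Haar probability measure, $\mathrm{vol}=\mu$, $\|\cdot\|_2$ the $L^2(\mu)$ norm. $\mathrm{D}(\mathcal{U},\mathcal{V})=\min_\varphi\|U-e^{i\varphi}V\|_\infty$, $B(\mathcal{V},\epsilon)=\{\mathcal{U}:\mathrm{D}(\mathcal{U},\mathcal{V})\le\epsilon\}$. $\mathcal{H}_k$ is the span of $U\mapsto\mathrm{tr}(A\,U^{\otimes s}\otimes\bar U^{\otimes s})$, $0\le s\le k$. $(T_\nu\Phi)(U)=\int\mathrm{d}\nu(V)\Phi(V^{-1}U)$. $\nu$ is a $\delta$-approximate $k$-expander if $\|T_{\nu,k}-T_{\mu,k}\|_\infty\le\delta$, with $T_{\nu,k}=\int\mathrm{d}\nu(U)\,U^{\otimes k}\otimes\bar U^{\otimes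 k}$. *)

theory Defs
  imports "HOL-Probability.Probability"
begin

text \<open>Matrices on C^d are modelled as complex^'n^'n with d = CARD('n).\<close>

definition cadj :: "complex^'n^'n \<Rightarrow> complex^'n^'n" where
  "cadj U = (\<chi> i j. cnj (U $ j $ i))"

definition unitary :: "complex^'n^'n \<Rightarrow> bool" where
  "unitary U \<longleftrightarrow> U ** cadj U = mat 1 \<and> cadj U ** U = mat 1"

text \<open>Operator norm: onorm of x \<mapsto> A x on complex^'n with the Euclidean norm.
  D(U,V) = min over phases of the operator norm of U - e^{i phi} V.\<close>
definition Dist :: "complex^'n^'n \<Rightarrow> complex^'n^'n \<Rightarrow> real" where
  "Dist U V = (INF \<phi>::real. onorm (\<lambda>x::complex^'n. U *v x - exp (\<i> * of_real \<phi>) *s (V *v x)))"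

definition ballD :: "complex^'n^'n \<Rightarrow> real \<Rightarrow> (complex^'n^'n) set" where
  "ballD V \<epsilon> = {U. unitary U \<and> Dist U V \<le> \<epsilon>}"

text \<open>Haar probability measure on U(d) (as a measure on the matrix space, concentrated on U(d),
  left and right invariant).\<close>
definition haar :: "(complex^'n^'n) measure \<Rightarrow> bool" where
  "haar \<mu> \<longleftrightarrow> prob_space \<mu> \<and> sets \<mu> = sets borel \<and> (AE U in \<mu>. unitary U) \<and>
     (\<forall>W. unitary W \<longrightarrow> distr \<mu> borel (\<lambda>U. W ** U) = \<mu> \<and> distr \<mu> borel (\<lambda>U. U ** W) = \<mu>)"

text \<open>Multi-indices of length 2s index the entries of U^{\<otimes>s} \<otimes> conj(U)^{\<otimes>s}.\<close>
definition idx :: "nat \<Rightarrow> 'n list set" where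
  "idx s = {I. length I = 2 * s}"

definition tens_entry :: "nat \<Rightarrow> complex^'n^'n \<Rightarrow> 'n list \<Rightarrow> 'n list \<Rightarrow> complex" where
  "tens_entry s U I J = (\<Prod>l<s. U $ (I ! l) $ (J ! l)) * (\<Prod>l<s. cnj (U $ (I ! (s + l)) $ (J ! (s + l))))"

text \<open>U \<mapsto> tr(A U^{\<otimes>s} \<otimes> conj(U)^{\<otimes>s}).\<close>
definition hk_gen :: "nat \<Rightarrow> ('n list \<Rightarrow> 'n list \<Rightarrow> complex) \<Rightarrow> complex^'n^'n \<Rightarrow> complex" where
  "hk_gen s A U = (\<Sum>I\<in>idx s. \<Sum>J\<in>idx s. A I J * tens_entry s U J I)"

text \<open>H_k: complex linear span of the generators with 0 \<le> s \<le> k.\<close>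
inductive_set Hk :: "nat \<Rightarrow> (complex^'n^'n \<Rightarrow> complex) set" for k where
  zero: "(\<lambda>U. 0) \<in> Hk k"
| gen: "s \<le> k \<Longrightarrow> (\<lambda>U. c * hk_gen s A U) \<in> Hk k"
| add: "f \<in> Hk k \<Longrightarrow> g \<in> Hk k \<Longrightarrow> (\<lambda>U. f U + g U) \<in> Hk k"

text \<open>Operator norm of a matrix indexed by a finite set S.\<close>
definition opnorm :: "'i set \<Rightarrow> ('i \<Rightarrow> 'i \<Rightarrow> complex) \<Rightarrow> real" where
  "opnorm S M = Sup {sqrt (\<Sum>i\<in>S. (cmod (\<Sum>j\<in>S. M i j * x j))\<^sup>2) | x.
                      (\<Sum>j\<in>S. (cmod (x j))\<^sup>2) \<le> 1}"

text \<open>T_{\<nu>,k} = \<integral> d\<nu>(U) U^{\<otimes>k} \<otimes> conj(U)^{\<otimes>k}, entrywise.\<close>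
definition Tmom :: "(complex^'n^'n) measure \<Rightarrow> nat \<Rightarrow> 'n list \<Rightarrow> 'n list \<Rightarrow> complex" where
  "Tmom \<nu> k I J = (\<integral>U. tens_entry k U I J \<partial>\<nu>)"

definition approx_expander ::
  "(complex^'n^'n) measure \<Rightarrow> (complex^'n^'n) measure \<Rightarrow> real \<Rightarrow> nat \<Rightarrow> bool" where
  "approx_expander \<mu> \<nu> \<delta> k \<longleftrightarrow> opnorm (idx k) (\<lambda>I J. Tmom \<nu> k I J - Tmom \<mu> k I J) \<le> \<delta>"

definition Tnu :: "(complex^'n^'n) measure \<Rightarrow> (complex^'n^'n \<Rightarrow> complex) \<Rightarrow> complex^'n^'n \<Rightarrow> complex" where
  "Tnu \<nu> \<Phi> U = (\<integral>V. \<Phi> (cadj V ** U) \<partial>\<nu>)"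

definition L2norm :: "(complex^'n^'n) measure \<Rightarrow> (complex^'n^'n \<Rightarrow> complex) \<Rightarrow> real" where
  "L2norm \<mu> \<Phi> = sqrt (\<integral>U. (cmod (\<Phi> U))\<^sup>2 \<partial>\<mu>)"

end

theory Submission
  imports Defs
begin

lemma prod_sum_lists:
  fixes f :: "nat \<Rightarrow> 'a::finite \<Rightarrow> 'b::comm_semiring_1"
  shows "(\<Prod>l<n. \<Sum>m\<in>UNIV. f l m) = (\<Sum>c\<in>{c. length c = n}. \<Prod>l<n. f l (c ! l))"
proof (induction n)
  case 0
  have "{c::'a list. length c = 0} = {[]}" by auto
  then show ?case by simp
next
  case (Suc n)
  have img: "{c::'a list. length c = Suc n} = (\<lambda>(c,m). c @ [m]) ` ({c. length c = n} \<times> UNIV)"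
  proof (rule set_eqI, rule iffI)
    fix x :: "'a list" assume "x \<in> {c. length c = Suc n}"
    then have "x = butlast x @ [last x]" "length (butlast x) = n"
      by (auto intro!: append_butlast_last_id[symmetric])
    then show "x \<in> (\<lambda>(c,m). c @ [m]) ` ({c. length c = n} \<times> UNIV)"
      by (metis (mono_tags, lifting) SigmaI UNIV_I case_prod_conv image_eqI mem_Collect_eq)
  qed auto
  have inj: "inj_on (\<lambda>(c,m). c @ [m]) ({c::'a list. length c = n} \<times> UNIV)"
    by (auto simp: inj_on_def)
  have "(\<Prod>l<Suc n. \<Sum>m\<in>UNIV. f l m) = (\<Prod>l<n. \<Sum>m\<in>UNIV. f l m) * (\<Sum>m\<in>UNIV. f n m)"
    by simp
  also have "\<dots> = (\<Sum>c\<in>{c. length c = n}. \<Sum>m\<in>UNIV. (\<Prod>l<n. f l (c ! l)) * f n m)"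
    by (simp add: Suc sum_product)
  also have "\<dots> = (\<Sum>(c,m)\<in>{c. length c = n} \<times> UNIV. (\<Prod>l<n. f l (c ! l)) * f n m)"
    by (simp add: sum.cartesian_product)
  also have "\<dots> = (\<Sum>(c,m)\<in>{c. length c = n} \<times> UNIV. \<Prod>l<Suc n. f l ((c @ [m]) ! l))"
    by (rule sum.cong[OF refl]) (auto simp: nth_append intro!: prod.cong)
  also have "\<dots> = (\<Sum>c\<in>{c. length c = Suc n}. \<Prod>l<Suc n. f l (c ! l))"
    unfolding img by (subst sum.reindex[OF inj]) (simp add: case_prod_unfold)
  finally show ?case .
qed

lemma prod_split2:
  fixes F :: "nat \<Rightarrow> 'b::comm_monoid_mult"
  shows "(\<Prod>l<k + k. F l) = (\<Prod>l<k. F l) * (\<Prod>l<k. F (k + l))"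
proof -
  have e: "{..<k+k} = {..<k} \<union> {k..<k+k}" by auto
  have "prod F ({..<k} \<union> {k..<k+k}) = prod F {..<k} * prod F {k..<k+k}"
    by (rule prod.union_disjoint) auto
  then have "(\<Prod>l<k + k. F l) = (\<Prod>l<k. F l) * (\<Prod>l\<in>{k..<k+k}. F l)"
    unfolding e .
  also have "(\<Prod>l\<in>{k..<k+k}. F l) = (\<Prod>l<k. F (k + l))"
    using prod.shift_bounds_nat_ivl[of F 0 k k] by (simp add: lessThan_atLeast0 add.commute)
  finally show ?thesis .
qed

definition tg :: "nat \<Rightarrow> complex^'n^'n \<Rightarrow> 'n list \<Rightarrow> 'n list \<Rightarrow> nat \<Rightarrow> complex" where
  "tg k U a b l = (if l < k then U $ (a ! l) $ (b ! l) else cnj (U $ (a ! l) $ (b ! l)))"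

lemma te_tg: "tens_entry k U a b = (\<Prod>l<2*k. tg k U a b l)"
  unfolding tens_entry_def tg_def mult_2 prod_split2 by simp

lemma fin_len[simp]: "finite {c::'a::finite list. length c = n}"
  using finite_lists_length_eq[of "UNIV::'a set" n] by simp

lemma idx_finite[simp]: "finite (idx k :: 'n::finite list set)"
  unfolding idx_def by simp

lemma te_mult:
  fixes A B :: "complex^'n^'n"
  shows "tens_entry k (A ** B) a b = (\<Sum>c\<in>idx k. tens_entry k A a c * tens_entry k B c b)"
proof -
  define F where "F l m = (if l < k then A $ (a!l) $ m * B $ m $ (b!l)
       else cnj (A $ (a!l) $ m) * cnj (B $ m $ (b!l)))" for l m
  have "tg k (A ** B) a b l = (\<Sum>m\<in>UNIV. F l m)" for l
    by (simp add: tg_def F_def matrix_matrix_mult_def cnj_sum)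
  then have "tens_entry k (A ** B) a b = (\<Prod>l<2*k. \<Sum>m\<in>UNIV. F l m)"
    by (simp add: te_tg)
  also have "\<dots> = (\<Sum>c\<in>idx k. \<Prod>l<2*k. F l (c ! l))"
    unfolding prod_sum_lists idx_def ..
  also have "\<dots> = (\<Sum>c\<in>idx k. tens_entry k A a c * tens_entry k B c b)"
    by (rule sum.cong) (auto simp: te_tg F_def tg_def prod.distrib[symmetric] intro!: prod.cong)
  finally show ?thesis .
qed

lemma te_cadj: "tens_entry k (cadj V) a b = cnj (tens_entry k V b a)"
  by (simp add: tens_entry_def cadj_def cnj_prod)

lemma cadj_cadj[simp]: "cadj (cadj A) = A"
  by (simp add: cadj_def vec_eq_iff)

lemma cadj_mult: "cadj (A ** B) = cadj B ** cadj A"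
  by (simp add: cadj_def vec_eq_iff matrix_matrix_mult_def cnj_sum mult.commute)

lemma cadj_mat1[simp]: "cadj (mat 1) = mat 1"
  by (simp add: cadj_def vec_eq_iff mat_def)

lemma unitary_cadj: "unitary U \<Longrightarrow> unitary (cadj U)"
  by (simp add: unitary_def)

lemma unitary_mult: "unitary A \<Longrightarrow> unitary B \<Longrightarrow> unitary (A ** B)"
  unfolding unitary_def cadj_mult
  by (metis matrix_mul_assoc matrix_mul_lid)

lemma unitary_cancel: "unitary W \<Longrightarrow> cadj W ** (W ** U) = U"
  by (metis matrix_mul_assoc matrix_mul_lid unitary_def)

lemma mcnj: "z * cnj z = complex_of_real ((cmod z)\<^sup>2)"
  by (metis complex_norm_square)

lemma unitary_row: "unitary U \<Longrightarrow> (\<Sum>j\<in>UNIV. (cmod (U $ i $ j))\<^sup>2) = 1"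
proof -
  assume "unitary U"
  then have "(U ** cadj U) $ i $ i = 1" by (simp add: unitary_def mat_def)
  then have "(\<Sum>j\<in>UNIV. U $ i $ j * cnj (U $ i $ j)) = 1"
    by (simp add: matrix_matrix_mult_def cadj_def)
  then have "complex_of_real (\<Sum>j\<in>UNIV. (cmod (U $ i $ j))\<^sup>2) = 1"
    unfolding mcnj of_real_sum .
  then show ?thesis by (metis of_real_eq_1_iff)
qed

lemma unitary_entry_le: "unitary U \<Longrightarrow> cmod (U $ i $ j) \<le> 1"
proof -
  assume u: "unitary U"
  have "(cmod (U $ i $ j))\<^sup>2 \<le> (\<Sum>j\<in>UNIV. (cmod (U $ i $ j))\<^sup>2)"
    by (rule member_le_sum) auto
  then have "(cmod (U $ i $ j))\<^sup>2 \<le> 1" using unitary_row[OF u] by simp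
  then show ?thesis by (simp add: power_le_one_iff abs_le_square_iff[symmetric])
qed

lemma te_bound: "unitary U \<Longrightarrow> cmod (tens_entry k U a b) \<le> 1"
  unfolding tens_entry_def norm_mult prod_norm[symmetric]
  by (intro mult_le_one prod_le_1 prod_nonneg) (auto simp: unitary_entry_le)

lemma unitary_total: fixes U :: "complex^'n^'n" shows "unitary U \<Longrightarrow> (\<Sum>i\<in>UNIV. \<Sum>j\<in>UNIV. U $ i $ j * cnj (U $ i $ j)) = of_nat CARD('n)"
proof -
  assume u: "unitary U"
  have "(\<Sum>j\<in>UNIV. U $ i $ j * cnj (U $ i $ j)) = 1" for i
    using unitary_row[OF u, of i] unfolding mcnj of_real_sum[symmetric] by simp
  then show ?thesis by simp
qed

lemma cs_sum:
  assumes "finite S"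
  shows "cmod (\<Sum>j\<in>S. a j * b j) \<le> sqrt (\<Sum>j\<in>S. (cmod (a j))\<^sup>2) * sqrt (\<Sum>j\<in>S. (cmod (b j))\<^sup>2)"
proof -
  have "cmod (\<Sum>j\<in>S. a j * b j) \<le> (\<Sum>j\<in>S. cmod (a j * b j))" by (rule norm_sum)
  also have "\<dots> = (\<Sum>j\<in>S. \<bar>cmod (a j)\<bar> * \<bar>cmod (b j)\<bar>)" by (simp add: norm_mult)
  also have "\<dots> \<le> L2_set (\<lambda>j. cmod (a j)) S * L2_set (\<lambda>j. cmod (b j)) S" by (rule L2_set_mult_ineq)
  finally show ?thesis by (simp add: L2_set_def)
qed

lemma cs_sum2:
  assumes "finite S"
  shows "(cmod (\<Sum>j\<in>S. a j * b j))\<^sup>2 \<le> (\<Sum>j\<in>S. (cmod (a j))\<^sup>2) * (\<Sum>j\<in>S. (cmod (b j))\<^sup>2)"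
proof -
  have "(cmod (\<Sum>j\<in>S. a j * b j))\<^sup>2 \<le> (sqrt (\<Sum>j\<in>S. (cmod (a j))\<^sup>2) * sqrt (\<Sum>j\<in>S. (cmod (b j))\<^sup>2))\<^sup>2"
    by (rule power_mono[OF cs_sum[OF assms]]) simp
  also have "\<dots> = (\<Sum>j\<in>S. (cmod (a j))\<^sup>2) * (\<Sum>j\<in>S. (cmod (b j))\<^sup>2)"
    by (simp add: power_mult_distrib sum_nonneg)
  finally show ?thesis .
qed

definition opset :: "'i set \<Rightarrow> ('i \<Rightarrow> 'i \<Rightarrow> complex) \<Rightarrow> real set" where
  "opset S M = {sqrt (\<Sum>i\<in>S. (cmod (\<Sum>j\<in>S. M i j * x j))\<^sup>2) | x.
                      (\<Sum>j\<in>S. (cmod (x j))\<^sup>2) \<le> 1}"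

lemma opnorm_opset: "opnorm S M = Sup (opset S M)"
  unfolding opnorm_def opset_def ..

lemma opset_bdd:
  assumes "finite S"
  shows "bdd_above (opset S M)"
proof (rule bdd_aboveI)
  fix r assume "r \<in> opset S M"
  then obtain x where r: "r = sqrt (\<Sum>i\<in>S. (cmod (\<Sum>j\<in>S. M i j * x j))\<^sup>2)"
    and x: "(\<Sum>j\<in>S. (cmod (x j))\<^sup>2) \<le> 1" unfolding opset_def by auto
  have "(\<Sum>i\<in>S. (cmod (\<Sum>j\<in>S. M i j * x j))\<^sup>2) \<le> (\<Sum>i\<in>S. (\<Sum>j\<in>S. (cmod (M i j))\<^sup>2) * (\<Sum>j\<in>S. (cmod (x j))\<^sup>2))"
    by (rule sum_mono) (rule cs_sum2[OF assms])
  also have "\<dots> \<le> (\<Sum>i\<in>S. (\<Sum>j\<in>S. (cmod (M i j))\<^sup>2) * 1)"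
    by (rule sum_mono, rule mult_left_mono[OF x]) (simp add: sum_nonneg)
  finally show "r \<le> sqrt (\<Sum>i\<in>S. \<Sum>j\<in>S. (cmod (M i j))\<^sup>2)" unfolding r by simp
qed

lemma opnorm_nonneg:
  assumes "finite S"
  shows "0 \<le> opnorm S M"
proof -
  have "0 \<in> opset S M" unfolding opset_def
    by (rule CollectI, rule exI[of _ "\<lambda>_. 0"]) simp
  then show ?thesis unfolding opnorm_opset using cSup_upper[OF _ opset_bdd[OF assms]] by blast
qed

lemma opnorm_le:
  assumes "finite S"
  shows "(\<Sum>i\<in>S. (cmod (\<Sum>j\<in>S. M i j * x j))\<^sup>2) \<le> (opnorm S M)\<^sup>2 * (\<Sum>j\<in>S. (cmod (x j))\<^sup>2)"
proof (cases "(\<Sum>j\<in>S. (cmod (x j))\<^sup>2) = 0")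
  case True
  then have "\<forall>j\<in>S. x j = 0" using assms by (simp add: sum_nonneg_eq_0_iff)
  then show ?thesis by simp
next
  case False
  define X where "X = (\<Sum>j\<in>S. (cmod (x j))\<^sup>2)"
  have Xpos: "X > 0" using False X_def by (simp add: sum_nonneg order_less_le)
  define r where "r = sqrt X"
  have rpos: "r > 0" using Xpos r_def by simp
  define y where "y j = x j / of_real r" for j
  have "(\<Sum>j\<in>S. (cmod (y j))\<^sup>2) = X / r\<^sup>2"
    by (simp add: y_def X_def norm_divide power_divide sum_divide_distrib)
  also have "\<dots> = 1" using Xpos r_def by simp
  finally have y1: "(\<Sum>j\<in>S. (cmod (y j))\<^sup>2) \<le> 1" by simp
  have "sqrt (\<Sum>i\<in>S. (cmod (\<Sum>j\<in>S. M i j * y j))\<^sup>2) \<in> opset S M"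
    unfolding opset_def using y1 by blast
  then have le: "sqrt (\<Sum>i\<in>S. (cmod (\<Sum>j\<in>S. M i j * y j))\<^sup>2) \<le> opnorm S M"
    unfolding opnorm_opset by (rule cSup_upper[OF _ opset_bdd[OF assms]])
  have "(\<Sum>j\<in>S. M i j * y j) = (\<Sum>j\<in>S. M i j * x j) / of_real r" for i
    by (simp add: y_def sum_divide_distrib)
  then have "(cmod (\<Sum>j\<in>S. M i j * y j))\<^sup>2 = (cmod (\<Sum>j\<in>S. M i j * x j))\<^sup>2 / r\<^sup>2" for i
    using rpos by (simp add: norm_divide power_divide)
  then have "(\<Sum>i\<in>S. (cmod (\<Sum>j\<in>S. M i j * y j))\<^sup>2) = (\<Sum>i\<in>S. (cmod (\<Sum>j\<in>S. M i j * x j))\<^sup>2) / r\<^sup>2"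
    by (simp add: sum_divide_distrib)
  then have "sqrt ((\<Sum>i\<in>S. (cmod (\<Sum>j\<in>S. M i j * x j))\<^sup>2) / r\<^sup>2) \<le> opnorm S M" using le by simp
  then have "sqrt (\<Sum>i\<in>S. (cmod (\<Sum>j\<in>S. M i j * x j))\<^sup>2) / r \<le> opnorm S M"
    using rpos by (simp add: real_sqrt_divide)
  then have "sqrt (\<Sum>i\<in>S. (cmod (\<Sum>j\<in>S. M i j * x j))\<^sup>2) \<le> opnorm S M * r"
    using rpos by (simp add: divide_le_eq)
  moreover have nn: "0 \<le> (\<Sum>i\<in>S. (cmod (\<Sum>j\<in>S. M i j * x j))\<^sup>2)" by (rule sum_nonneg) simp
  ultimately have "(sqrt (\<Sum>i\<in>S. (cmod (\<Sum>j\<in>S. M i j * x j))\<^sup>2))\<^sup>2 \<le> (opnorm S M * r)\<^sup>2"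
    by (intro power_mono) simp_all
  with nn show ?thesis using Xpos by (simp add: r_def X_def power_mult_distrib)
qed

lemma opnorm_le_transp:
  assumes "finite S"
  shows "(\<Sum>i\<in>S. (cmod (\<Sum>j\<in>S. M j i * x j))\<^sup>2) \<le> (opnorm S M)\<^sup>2 * (\<Sum>j\<in>S. (cmod (x j))\<^sup>2)"
proof -
  define y where "y i = (\<Sum>j\<in>S. M j i * x j)" for i
  define T where "T = (\<Sum>i\<in>S. (cmod (y i))\<^sup>2)"
  define X where "X = (\<Sum>j\<in>S. (cmod (x j))\<^sup>2)"
  have T0: "T \<ge> 0" "X \<ge> 0" unfolding T_def X_def by (rule sum_nonneg, simp)+
  have "complex_of_real T = (\<Sum>i\<in>S. cnj (y i) * y i)"
    unfolding T_def of_real_sum by (rule sum.cong[OF refl]) (metis complex_norm_square mult.commute)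
  also have "\<dots> = (\<Sum>i\<in>S. \<Sum>j\<in>S. x j * (M j i * cnj (y i)))"
  proof (rule sum.cong[OF refl])
    fix i
    have e: "\<And>w. w * (\<Sum>j\<in>S. M j i * x j) = (\<Sum>j\<in>S. x j * (M j i * w))"
      by (simp add: sum_distrib_left mult_ac)
    show "cnj (y i) * y i = (\<Sum>j\<in>S. x j * (M j i * cnj (y i)))"
      by (simp only: y_def e)
  qed
  also have "\<dots> = (\<Sum>j\<in>S. \<Sum>i\<in>S. x j * (M j i * cnj (y i)))"
    by (rule sum.swap)
  also have "\<dots> = (\<Sum>j\<in>S. x j * (\<Sum>i\<in>S. M j i * cnj (y i)))"
    by (simp add: sum_distrib_left)
  finally have Teq: "complex_of_real T = (\<Sum>j\<in>S. x j * (\<Sum>i\<in>S. M j i * cnj (y i)))" .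
  have "T = cmod (complex_of_real T)" using T0 by simp
  also have "\<dots> \<le> sqrt X * sqrt (\<Sum>j\<in>S. (cmod (\<Sum>i\<in>S. M j i * cnj (y i)))\<^sup>2)"
    unfolding Teq X_def by (rule cs_sum[OF assms])
  also have "\<dots> \<le> sqrt X * sqrt ((opnorm S M)\<^sup>2 * (\<Sum>i\<in>S. (cmod (cnj (y i)))\<^sup>2))"
    by (intro mult_left_mono real_sqrt_le_mono opnorm_le[OF assms]) (simp add: T0)
  also have "\<dots> = sqrt X * opnorm S M * sqrt T"
    using opnorm_nonneg[OF assms, of M] by (simp add: T_def real_sqrt_mult)
  finally have *: "T \<le> sqrt X * opnorm S M * sqrt T" .
  have "T \<le> (opnorm S M)\<^sup>2 * X"
  proof (cases "T = 0")
    case True then show ?thesis using T0 by simp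
  next
    case False
    then have Tp: "sqrt T > 0" using T0 by simp
    have "sqrt T * sqrt T \<le> sqrt X * opnorm S M * sqrt T" using * T0 by simp
    then have "sqrt T \<le> sqrt X * opnorm S M" using Tp by (rule mult_right_le_imp_le)
    then have "(sqrt T)\<^sup>2 \<le> (sqrt X * opnorm S M)\<^sup>2" by (rule power_mono) (simp add: T0)
    then show ?thesis using T0 by (simp add: power_mult_distrib mult.commute)
  qed
  then show ?thesis unfolding T_def X_def y_def .
qed

definition mm :: "'i set \<Rightarrow> ('i \<Rightarrow> 'i \<Rightarrow> complex) \<Rightarrow> ('i \<Rightarrow> 'i \<Rightarrow> complex) \<Rightarrow> 'i \<Rightarrow> 'i \<Rightarrow> complex" where
  "mm S M C = (\<lambda>a b. \<Sum>c\<in>S. M a c * C c b)"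

definition hs :: "'i set \<Rightarrow> ('i \<Rightarrow> 'i \<Rightarrow> complex) \<Rightarrow> real" where
  "hs S C = (\<Sum>a\<in>S. \<Sum>b\<in>S. (cmod (C a b))\<^sup>2)"

lemma hs_nonneg: "0 \<le> hs S C"
  unfolding hs_def by (intro sum_nonneg) simp

lemma hs_mm:
  assumes "\<And>x. (\<Sum>a\<in>S. (cmod (\<Sum>c\<in>S. M a c * x c))\<^sup>2) \<le> q * (\<Sum>c\<in>S. (cmod (x c))\<^sup>2)"
  shows "hs S (mm S M C) \<le> q * hs S C"
proof -
  have "hs S (mm S M C) = (\<Sum>b\<in>S. \<Sum>a\<in>S. (cmod (\<Sum>c\<in>S. M a c * C c b))\<^sup>2)"
    unfolding hs_def mm_def by (rule sum.swap)
  also have "\<dots> \<le> (\<Sum>b\<in>S. q * (\<Sum>c\<in>S. (cmod (C c b))\<^sup>2))"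
    by (rule sum_mono) (rule assms)
  also have "\<dots> = q * (\<Sum>b\<in>S. \<Sum>c\<in>S. (cmod (C c b))\<^sup>2)"
    by (simp add: sum_distrib_left)
  also have "(\<Sum>b\<in>S. \<Sum>c\<in>S. (cmod (C c b))\<^sup>2) = hs S C"
    unfolding hs_def by (rule sum.swap)
  finally show ?thesis .
qed

lemma power_trick:
  fixes s :: "nat \<Rightarrow> real"
  assumes nn: "\<And>n. 0 \<le> s n"
    and lc: "\<And>n. (s (Suc n))\<^sup>2 \<le> s n * s (Suc (Suc n))"
    and bd: "\<And>n. s n \<le> K * q ^ n"
    and q: "0 \<le> q"
  shows "s 1 \<le> q * s 0"
proof (rule ccontr)
  assume "\<not> s 1 \<le> q * s 0"
  then have gt: "s 1 > q * s 0" by simp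
  have s1: "s 1 > 0" using gt q nn[of 0] by (smt (verit) mult_nonneg_nonneg)
  have "(s 1)\<^sup>2 > 0" using s1 by simp
  then have "s 0 * s 2 > 0" using lc[of 0] by (simp add: numeral_2_eq_2)
  then have s0: "s 0 > 0" using nn[of 0] nn[of 2] by (metis less_eq_real_def mult_zero_left)
  define \<rho> where "\<rho> = s 1 / s 0"
  have rho: "\<rho> > q" using gt s0 by (simp add: \<rho>_def pos_less_divide_eq mult.commute)
  have s1r: "s 1 = \<rho> * s 0" using s0 by (simp add: \<rho>_def)
  have claim: "s n > 0 \<and> \<rho> * s n \<le> s (Suc n)" for n
  proof (induction n)
    case 0 then show ?case using s0 s1r by simp
  next
    case (Suc n)
    then have a: "s n > 0" and b: "\<rho> * s n \<le> s (Suc n)" by auto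
    have rpos: "\<rho> > 0" using s1r s1 s0 by (metis mult_pos_pos nn not_less_iff_gr_or_eq q rho zero_less_mult_pos2)
    have sp: "s (Suc n) > 0" using a b rpos by (smt (verit) mult_pos_pos)
    have "(\<rho> * s (Suc n)) * s n = (\<rho> * s n) * s (Suc n)" by simp
    also have "\<dots> \<le> s (Suc n) * s (Suc n)" using b sp by (simp add: mult_right_mono)
    also have "\<dots> \<le> s n * s (Suc (Suc n))" using lc[of n] by (simp add: power2_eq_square)
    finally have "(\<rho> * s (Suc n)) * s n \<le> s (Suc (Suc n)) * s n" by (simp add: mult.commute)
    then have "\<rho> * s (Suc n) \<le> s (Suc (Suc n))" using a by (rule mult_right_le_imp_le)
    then show ?case using sp by simp
  qed
  have rpos: "\<rho> > 0" using rho q by simp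
  have geo: "\<rho> ^ n * s 0 \<le> s n" for n
  proof (induction n)
    case 0 then show ?case by simp
  next
    case (Suc n)
    have "\<rho> ^ Suc n * s 0 = \<rho> * (\<rho> ^ n * s 0)" by simp
    also have "\<dots> \<le> \<rho> * s n" using Suc rpos by (simp add: mult_left_mono)
    also have "\<dots> \<le> s (Suc n)" using claim[of n] by simp
    finally show ?case .
  qed
  show False
  proof (cases "q = 0")
    case True
    then show False using geo[of 1] bd[of 1] s1r s1 by simp
  next
    case False
    then have qp: "q > 0" using q by simp
    have "\<rho> / q > 1" using rho qp by simp
    then obtain n where n: "K / s 0 < (\<rho> / q) ^ n" using real_arch_pow by blast
    then have "K < (\<rho> / q) ^ n * s 0" using s0 by (simp add: divide_less_eq)
    then have "K * q ^ n < (\<rho> / q) ^ n * s 0 * q ^ n" using qp by simp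
    also have "\<dots> = \<rho> ^ n * s 0" using qp by (simp add: power_divide)
    finally show False using geo[of n] bd[of n] by simp
  qed
qed

definition ell :: "nat \<Rightarrow> ('n list \<Rightarrow> 'n list \<Rightarrow> complex) \<Rightarrow> complex^'n^'n \<Rightarrow> complex" where
  "ell k C U = (\<Sum>a\<in>idx k. \<Sum>b\<in>idx k. C a b * tens_entry k U a b)"

lemma hk_gen_ell: "hk_gen s A U = ell s (\<lambda>a b. A b a) U"
  unfolding hk_gen_def ell_def by (rule sum.swap)

lemma ell_add: "ell k (\<lambda>a b. C a b + D a b) U = ell k C U + ell k D U"
  unfolding ell_def by (simp add: distrib_right sum.distrib)

lemma ell_scale: "ell k (\<lambda>a b. c * C a b) U = c * ell k C U"
  unfolding ell_def by (simp add: sum_distrib_left mult_ac)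

lemma ell_zero: "ell k (\<lambda>a b. 0) U = 0"
  unfolding ell_def by simp

definition ext :: "nat \<Rightarrow> 'n list \<Rightarrow> 'n \<Rightarrow> 'n list" where
  "ext m a p = take m a @ [p] @ drop m a @ [p]"

lemma ext_idx: "a \<in> idx m \<Longrightarrow> ext m a p \<in> idx (Suc m)"
  by (simp add: idx_def ext_def)

lemma ext_nth:
  assumes "length a = 2 * m"
  shows "l < m \<Longrightarrow> ext m a p ! l = a ! l"
    and "ext m a p ! m = p"
    and "l < m \<Longrightarrow> ext m a p ! Suc (m + l) = a ! (m + l)"
    and "ext m a p ! Suc (m + m) = p"
  using assms by (auto simp: ext_def nth_append)

lemma te_ext:
  assumes a: "a \<in> idx m" and b: "b \<in> idx m"
  shows "tens_entry (Suc m) U (ext m a p) (ext m b q) = tens_entry m U a b * (U $ p $ q * cnj (U $ p $ q))"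
proof -
  have la: "length a = 2 * m" and lb: "length b = 2 * m" using a b by (auto simp: idx_def)
  have e1: "(\<Prod>l<m. U $ (ext m a p ! l) $ (ext m b q ! l)) = (\<Prod>l<m. U $ (a ! l) $ (b ! l))"
    by (rule prod.cong) (auto simp: ext_nth[OF la] ext_nth[OF lb])
  have e2: "(\<Prod>l<m. cnj (U $ (ext m a p ! (Suc m + l)) $ (ext m b q ! (Suc m + l))))
      = (\<Prod>l<m. cnj (U $ (a ! (m + l)) $ (b ! (m + l))))"
    by (rule prod.cong) (auto simp: ext_nth[OF la] ext_nth[OF lb])
  show ?thesis
    unfolding tens_entry_def prod.lessThan_Suc e1 e2
    by (simp add: ext_nth[OF la] ext_nth[OF lb] mult_ac)
qed

lemma sum_delta2:
  fixes c :: complex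
  assumes "finite A" "finite B" "e1 \<in> A" "e2 \<in> B"
  shows "(\<Sum>x\<in>A. \<Sum>y\<in>B. (if x = e1 \<and> y = e2 then c else 0) * f x y) = c * f e1 e2"
proof -
  have "(\<Sum>x\<in>A. \<Sum>y\<in>B. (if x = e1 \<and> y = e2 then c else 0) * f x y)
      = (\<Sum>x\<in>A. if x = e1 then (\<Sum>y\<in>B. if y = e2 then c * f x y else 0) else 0)"
    by (rule sum.cong[OF refl]) (auto intro!: sum.cong)
  also have "\<dots> = c * f e1 e2" using assms by simp
  finally show ?thesis .
qed

lemma lift_one:
  fixes C :: "'n::finite list \<Rightarrow> 'n list \<Rightarrow> complex"
  shows "\<exists>C'. \<forall>U. unitary U \<longrightarrow> ell (Suc m) C' U = ell m C U"
proof -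
  define d where "d = complex_of_nat CARD('n)"
  have d0: "d \<noteq> 0" by (simp add: d_def)
  define Tup :: "(('n list \<times> 'n list) \<times> ('n \<times> 'n)) set"
    where "Tup = (idx m \<times> idx m) \<times> (UNIV \<times> UNIV)"
  define g where "g x y t = (case t of ((a,b),(p,q)) \<Rightarrow>
      (if x = ext m a p \<and> y = ext m b q then C a b / d else 0))" for x y t
  define C' where "C' x y = (\<Sum>t\<in>Tup. g x y t)" for x y
  show ?thesis
  proof (intro exI allI impI)
    fix U :: "complex^'n^'n" assume u: "unitary U"
    have "ell (Suc m) C' U = (\<Sum>x\<in>idx (Suc m). \<Sum>y\<in>idx (Suc m). \<Sum>t\<in>Tup. g x y t * tens_entry (Suc m) U x y)"
      unfolding ell_def C'_def by (simp add: sum_distrib_right)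
    also have "\<dots> = (\<Sum>x\<in>idx (Suc m). \<Sum>t\<in>Tup. \<Sum>y\<in>idx (Suc m). g x y t * tens_entry (Suc m) U x y)"
      by (rule sum.cong[OF refl]) (rule sum.swap)
    also have "\<dots> = (\<Sum>t\<in>Tup. \<Sum>x\<in>idx (Suc m). \<Sum>y\<in>idx (Suc m). g x y t * tens_entry (Suc m) U x y)"
      by (rule sum.swap)
    also have "\<dots> = (\<Sum>t\<in>Tup. case t of ((a,b),(p,q)) \<Rightarrow>
          (C a b / d * tens_entry m U a b) * (U $ p $ q * cnj (U $ p $ q)))"
    proof (rule sum.cong[OF refl])
      fix t assume t: "t \<in> Tup"
      obtain a b p q where tt: "t = ((a,b),(p,q))" by (metis prod.collapse)
      have ab: "a \<in> idx m" "b \<in> idx m" using t tt by (auto simp: Tup_def)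
      have "(\<Sum>x\<in>idx (Suc m). \<Sum>y\<in>idx (Suc m). g x y t * tens_entry (Suc m) U x y)
          = (\<Sum>x\<in>idx (Suc m). \<Sum>y\<in>idx (Suc m). (if x = ext m a p \<and> y = ext m b q then C a b / d else 0) * tens_entry (Suc m) U x y)"
        by (simp add: g_def tt)
      also have "\<dots> = C a b / d * tens_entry (Suc m) U (ext m a p) (ext m b q)"
        by (rule sum_delta2) (auto intro: ext_idx ab)
      also have "\<dots> = (C a b / d * tens_entry m U a b) * (U $ p $ q * cnj (U $ p $ q))"
        by (simp add: te_ext[OF ab] mult_ac)
      finally show "(\<Sum>x\<in>idx (Suc m). \<Sum>y\<in>idx (Suc m). g x y t * tens_entry (Suc m) U x y) =
          (case t of ((a,b),(p,q)) \<Rightarrow> (C a b / d * tens_entry m U a b) * (U $ p $ q * cnj (U $ p $ q)))"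
        by (simp add: tt)
    qed
    also have "\<dots> = (\<Sum>ab\<in>idx m \<times> idx m. \<Sum>pq\<in>UNIV \<times> UNIV.
          (case ab of (a,b) \<Rightarrow> C a b / d * tens_entry m U a b) * (case pq of (p,q) \<Rightarrow> U $ p $ q * cnj (U $ p $ q)))"
      unfolding Tup_def sum.cartesian_product by (rule sum.cong[OF refl]) (auto simp: case_prod_unfold)
    also have "\<dots> = (\<Sum>ab\<in>idx m \<times> idx m. case ab of (a,b) \<Rightarrow> C a b / d * tens_entry m U a b)
                   * (\<Sum>pq\<in>UNIV \<times> UNIV. case pq of (p,q) \<Rightarrow> U $ p $ q * cnj (U $ p $ q))"
      by (rule sum_product[symmetric])
    also have "(\<Sum>pq\<in>UNIV \<times> UNIV. case pq of (p,q) \<Rightarrow> U $ p $ q * cnj (U $ p $ q)) = d"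
      unfolding d_def sum.cartesian_product[symmetric] by (rule unitary_total[OF u])
    also have "(\<Sum>ab\<in>idx m \<times> idx m. case ab of (a,b) \<Rightarrow> C a b / d * tens_entry m U a b)
        = (\<Sum>a\<in>idx m. \<Sum>b\<in>idx m. C a b * tens_entry m U a b) / d"
      unfolding sum.cartesian_product[symmetric] by (simp add: sum_divide_distrib)
    finally show "ell (Suc m) C' U = ell m C U" using d0 by (simp add: ell_def)
  qed
qed

lemma lift_le:
  fixes C :: "'n::finite list \<Rightarrow> 'n list \<Rightarrow> complex"
  assumes "s \<le> k"
  shows "\<exists>C'. \<forall>U. unitary U \<longrightarrow> ell k C' U = ell s C U"
  using assms
proof (induction k rule: dec_induct)
  case base then show ?case by blast
next
  case (step n)
  then obtain C1 where C1: "\<forall>U. unitary U \<longrightarrow> ell n C1 U = ell s C U" by blast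
  obtain C2 where C2: "\<forall>U. unitary U \<longrightarrow> ell (Suc n) C2 U = ell n C1 U" using lift_one by blast
  show ?case using C1 C2 by auto
qed

lemma Hk_rep:
  fixes \<Phi> :: "complex^'n::finite^'n \<Rightarrow> complex"
  assumes "\<Phi> \<in> Hk k"
  shows "\<exists>C. \<forall>U. unitary U \<longrightarrow> \<Phi> U = ell k C U"
  using assms
proof (induction rule: Hk.induct)
  case zero
  show ?case by (rule exI[of _ "\<lambda>a b. 0"]) (simp add: ell_zero)
next
  case (gen s c A)
  obtain C' where C': "\<forall>U. unitary U \<longrightarrow> ell k C' U = ell s (\<lambda>a b. c * A b a) U"
    using lift_le[OF gen] by blast
  have "c * hk_gen s A U = ell s (\<lambda>a b. c * A b a) U" for U :: "complex^'n^'n"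
    by (simp add: hk_gen_ell ell_scale)
  then show ?case using C' by (intro exI[of _ C']) auto
next
  case (add f g)
  then obtain C1 C2 where "\<forall>U. unitary U \<longrightarrow> f U = ell k C1 U" "\<forall>U. unitary U \<longrightarrow> g U = ell k C2 U"
    by blast
  then show ?case by (intro exI[of _ "\<lambda>a b. C1 a b + C2 a b"]) (simp add: ell_add)
qed

lemma cont_entry: "continuous_on S (\<lambda>x. f x $ i $ j)" if "continuous_on S f"
  by (intro continuous_on_component that)

lemma cont_te: "continuous_on S (\<lambda>x. tens_entry k (f x) a b)" if "continuous_on S f"
  unfolding tens_entry_def
  by (intro continuous_on_mult continuous_on_prod continuous_on_cnj cont_entry that)

lemma cont_hk_gen: "continuous_on S (\<lambda>x. hk_gen s A (f x))" if "continuous_on S f"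
  unfolding hk_gen_def
  by (intro continuous_on_sum continuous_on_mult continuous_on_const cont_te that)

lemma Hk_cont:
  assumes "\<Phi> \<in> Hk k"
  shows "continuous_on UNIV \<Phi>"
  using assms
proof (induction rule: Hk.induct)
  case zero then show ?case by simp
next
  case (gen s c A)
  show ?case by (intro continuous_on_mult continuous_on_const cont_hk_gen continuous_on_id)
next
  case (add f g)
  then show ?case by (intro continuous_on_add)
qed

definition umeas :: "(complex^'n^'n) measure \<Rightarrow> bool" where
  "umeas M \<longleftrightarrow> prob_space M \<and> sets M = sets borel \<and> (AE U in M. unitary U)"

definition goodf :: "(complex^'n^'n \<Rightarrow> 'b::{real_normed_field,banach,second_countable_topology}) \<Rightarrow> bool" where
  "goodf f \<longleftrightarrow> continuous_on UNIV f \<and> (\<exists>B. \<forall>U. unitary U \<longrightarrow> norm (f U) \<le> B)"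

lemma umeasD:
  assumes "umeas M"
  shows "prob_space M" "sets M = sets borel" "AE U in M. unitary U"
  using assms by (auto simp: umeas_def)

lemma haar_umeas: "haar \<mu> \<Longrightarrow> umeas \<mu>"
  by (simp add: haar_def umeas_def)

lemma meas_borel:
  assumes "sets M = sets borel" "f \<in> borel_measurable borel"
  shows "f \<in> borel_measurable M"
  using assms measurable_cong_sets by blast

lemma goodf_meas: "sets M = sets borel \<Longrightarrow> goodf f \<Longrightarrow> f \<in> borel_measurable M"
  unfolding goodf_def by (auto intro: meas_borel borel_measurable_continuous_onI)

lemma goodf_integrable:
  assumes "umeas M" "goodf f"
  shows "integrable M f"
proof -
  obtain B where B: "\<forall>U. unitary U \<longrightarrow> norm (f U) \<le> B" using assms(2) by (auto simp: goodf_def)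
  interpret prob_space M using umeasD[OF assms(1)] by simp
  show ?thesis
  proof (rule integrable_const_bound)
    show "AE x in M. norm (f x) \<le> B" using umeasD(3)[OF assms(1)] by eventually_elim (use B in auto)
    show "f \<in> borel_measurable M" by (rule goodf_meas[OF umeasD(2)[OF assms(1)] assms(2)])
  qed
qed

lemma goodf_const: "goodf (\<lambda>U. c)"
  unfolding goodf_def by auto

lemma goodf_add:
  fixes f g :: "complex^'n::finite^'n \<Rightarrow> 'b::{real_normed_field,banach,second_countable_topology}"
  shows "goodf f \<Longrightarrow> goodf g \<Longrightarrow> goodf (\<lambda>U. f U + g U)"
  unfolding goodf_def
proof (elim conjE exE, intro conjI continuous_on_add exI allI impI)
  fix B1 B2 and U :: "complex^'n^'n" assume "\<forall>U. unitary U \<longrightarrow> norm (f U) \<le> B1" "\<forall>U. unitary U \<longrightarrow> norm (g U) \<le> B2" "unitary U"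
  then show "norm (f U + g U) \<le> B1 + B2" by (meson add_mono norm_triangle_le)
qed

lemma goodf_diff:
  fixes f g :: "complex^'n::finite^'n \<Rightarrow> 'b::{real_normed_field,banach,second_countable_topology}"
  shows "goodf f \<Longrightarrow> goodf g \<Longrightarrow> goodf (\<lambda>U. f U - g U)"
  unfolding goodf_def
proof (elim conjE exE, intro conjI continuous_on_diff exI allI impI)
  fix B1 B2 and U :: "complex^'n^'n" assume "\<forall>U. unitary U \<longrightarrow> norm (f U) \<le> B1" "\<forall>U. unitary U \<longrightarrow> norm (g U) \<le> B2" "unitary U"
  then show "norm (f U - g U) \<le> B1 + B2" by (meson add_mono norm_triangle_ineq4 order_trans)
qed

lemma goodf_mult:
  fixes f g :: "complex^'n::finite^'n \<Rightarrow> 'b::{real_normed_field,banach,second_countable_topology}"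
  shows "goodf f \<Longrightarrow> goodf g \<Longrightarrow> goodf (\<lambda>U. f U * g U)"
  unfolding goodf_def
proof (elim conjE exE, intro conjI continuous_on_mult exI allI impI)
  fix B1 B2 and U :: "complex^'n^'n" assume b1: "\<forall>U. unitary U \<longrightarrow> norm (f U) \<le> B1" and b2: "\<forall>U. unitary U \<longrightarrow> norm (g U) \<le> B2"
    and u: "unitary U"
  have "norm (f U * g U) = norm (f U) * norm (g U)" by (simp add: norm_mult)
  also have "\<dots> \<le> B1 * B2" using b1 b2 u by (meson mult_mono norm_ge_zero order_trans)
  finally show "norm (f U * g U) \<le> B1 * B2" .
qed

lemma goodf_cnj: "goodf f \<Longrightarrow> goodf (\<lambda>U. cnj (f U))"
  unfolding goodf_def by (auto intro: continuous_on_cnj)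

lemma goodf_cmod: "goodf f \<Longrightarrow> goodf (\<lambda>U. cmod (f U))"
  unfolding goodf_def by (auto intro: continuous_on_norm)

lemma goodf_sum: "finite S \<Longrightarrow> (\<And>i. i \<in> S \<Longrightarrow> goodf (f i)) \<Longrightarrow> goodf (\<lambda>U. \<Sum>i\<in>S. f i U)"
proof (induction S rule: finite_induct)
  case empty then show ?case by (simp add: goodf_const)
next
  case (insert x F)
  then show ?case by (simp add: goodf_add)
qed

lemma goodf_te: "goodf (\<lambda>U. tens_entry k U a b)"
  unfolding goodf_def
  by (auto intro!: cont_te continuous_on_id exI[of _ 1] te_bound)

lemma goodf_ell: "goodf (\<lambda>U. ell k C U)"
  unfolding ell_def by (intro goodf_sum goodf_mult goodf_const goodf_te) auto

lemma cont_mmult: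
  fixes f g :: "'x::topological_space \<Rightarrow> complex^'n^'n"
  assumes "continuous_on S f" "continuous_on S g"
  shows "continuous_on S (\<lambda>x. f x ** g x)"
  unfolding matrix_matrix_mult_def
  by (intro continuous_on_vec_lambda continuous_on_sum continuous_on_mult cont_entry assms)

lemma cont_cadj:
  fixes f :: "'x::topological_space \<Rightarrow> complex^'n^'n"
  assumes "continuous_on S f"
  shows "continuous_on S (\<lambda>x. cadj (f x))"
  unfolding cadj_def
  by (intro continuous_on_vec_lambda continuous_on_cnj cont_entry assms)

lemma cont_mr: fixes U :: "complex^'n::finite^'n" shows "continuous_on UNIV (\<lambda>W::complex^'n^'n. W ** U)"
  using cont_mmult[of UNIV "\<lambda>W. W" "\<lambda>W. U"] by (simp add: continuous_on_id continuous_on_const)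

lemma cont_ml: fixes U :: "complex^'n::finite^'n" shows "continuous_on UNIV (\<lambda>W::complex^'n^'n. U ** W)"
  using cont_mmult[of UNIV "\<lambda>W. U" "\<lambda>W. W"] by (simp add: continuous_on_id continuous_on_const)

lemma mult_meas:
  fixes U :: "complex^'n::finite^'n"
  assumes "sets M = sets borel"
  shows "(\<lambda>W. W ** U) \<in> M \<rightarrow>\<^sub>M borel" "(\<lambda>W. U ** W) \<in> M \<rightarrow>\<^sub>M borel"
  by (intro meas_borel[OF assms] borel_measurable_continuous_onI cont_mr cont_ml)+

lemma ell_mm:
  "ell k (mm (idx k) Z C) U = (\<Sum>a\<in>idx k. \<Sum>b\<in>idx k. C a b * (\<Sum>c\<in>idx k. Z c a * tens_entry k U c b))"
proof -
  let ?I = "idx k :: 'n list set"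
  have "ell k (mm ?I Z C) U = (\<Sum>x\<in>?I. \<Sum>b\<in>?I. \<Sum>c\<in>?I. Z x c * C c b * tens_entry k U x b)"
    unfolding ell_def mm_def by (simp add: sum_distrib_right)
  also have "\<dots> = (\<Sum>x\<in>?I. \<Sum>c\<in>?I. \<Sum>b\<in>?I. Z x c * C c b * tens_entry k U x b)"
    by (rule sum.cong[OF refl]) (rule sum.swap)
  also have "\<dots> = (\<Sum>c\<in>?I. \<Sum>x\<in>?I. \<Sum>b\<in>?I. Z x c * C c b * tens_entry k U x b)"
    by (rule sum.swap)
  also have "\<dots> = (\<Sum>c\<in>?I. \<Sum>b\<in>?I. \<Sum>x\<in>?I. Z x c * C c b * tens_entry k U x b)"
    by (rule sum.cong[OF refl]) (rule sum.swap)
  also have "\<dots> = (\<Sum>a\<in>?I. \<Sum>b\<in>?I. C a b * (\<Sum>c\<in>?I. Z c a * tens_entry k U c b))"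
    by (simp add: sum_distrib_left mult_ac)
  finally show ?thesis .
qed

lemma ell_cadj_mult:
  "ell k C (cadj W ** U) = (\<Sum>a\<in>idx k. \<Sum>b\<in>idx k. C a b * (\<Sum>c\<in>idx k. cnj (tens_entry k W c a) * tens_entry k U c b))"
  unfolding ell_def te_mult te_cadj ..

lemma integral_sum_good:
  assumes "umeas M" "finite S" "\<And>i. i \<in> S \<Longrightarrow> goodf (f i)"
  shows "(\<integral>U. (\<Sum>i\<in>S. f i U) \<partial>M) = (\<Sum>i\<in>S. \<integral>U. f i U \<partial>M)"
  by (rule Bochner_Integration.integral_sum) (auto intro: goodf_integrable[OF assms(1)] assms(3))

lemma int_ell:
  assumes "umeas M"
  shows "(\<integral>U. ell k C U \<partial>M) = (\<Sum>a\<in>idx k. \<Sum>b\<in>idx k. C a b * Tmom M k a b)"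
proof -
  have "(\<integral>U. ell k C U \<partial>M) = (\<Sum>a\<in>idx k. \<integral>U. (\<Sum>b\<in>idx k. C a b * tens_entry k U a b) \<partial>M)"
    unfolding ell_def
    by (rule integral_sum_good[OF assms]) (auto intro!: goodf_sum goodf_mult goodf_const goodf_te)
  also have "\<dots> = (\<Sum>a\<in>idx k. \<Sum>b\<in>idx k. \<integral>U. C a b * tens_entry k U a b \<partial>M)"
    by (rule sum.cong[OF refl], rule integral_sum_good[OF assms])
       (auto intro!: goodf_mult goodf_const goodf_te)
  also have "\<dots> = (\<Sum>a\<in>idx k. \<Sum>b\<in>idx k. C a b * Tmom M k a b)"
    by (simp add: Tmom_def)
  finally show ?thesis .
qed

lemma P_right:
  assumes h: "haar \<mu>" and u: "unitary U" and a: "a \<in> idx k" and b: "b \<in> idx k"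
  shows "(\<Sum>c\<in>idx k. Tmom \<mu> k a c * tens_entry k U c b) = Tmom \<mu> k a b"
proof -
  have um: "umeas \<mu>" by (rule haar_umeas[OF h])
  have d: "distr \<mu> borel (\<lambda>W. W ** U) = \<mu>" using h u by (simp add: haar_def)
  have "(\<Sum>c\<in>idx k. Tmom \<mu> k a c * tens_entry k U c b)
      = (\<Sum>c\<in>idx k. \<integral>W. tens_entry k W a c * tens_entry k U c b \<partial>\<mu>)"
    by (simp add: Tmom_def)
  also have "\<dots> = (\<integral>W. (\<Sum>c\<in>idx k. tens_entry k W a c * tens_entry k U c b) \<partial>\<mu>)"
    by (rule integral_sum_good[OF um, symmetric]) (auto intro!: goodf_mult goodf_const goodf_te)
  also have "\<dots> = (\<integral>W. tens_entry k (W ** U) a b \<partial>\<mu>)"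
    by (simp add: te_mult)
  also have "\<dots> = (\<integral>W. tens_entry k W a b \<partial>(distr \<mu> borel (\<lambda>W. W ** U)))"
    by (rule integral_distr[symmetric])
       (auto intro!: mult_meas umeasD[OF um] borel_measurable_continuous_onI cont_te continuous_on_id)
  also have "\<dots> = Tmom \<mu> k a b" by (simp add: d Tmom_def)
  finally show ?thesis .
qed

lemma P_sa:
  assumes h: "haar \<mu>" and a: "a \<in> idx k" and b: "b \<in> idx k"
  shows "cnj (Tmom \<mu> k b a) = Tmom \<mu> k a b"
proof -
  have um: "umeas \<mu>" by (rule haar_umeas[OF h])
  interpret prob_space \<mu> using umeasD[OF um] by simp
  have step: "(\<Sum>c\<in>idx k. Tmom \<mu> k a c * cnj (Tmom \<mu> k b c)) = Tmom \<mu> k a b"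
    if a: "a \<in> idx k" and b: "b \<in> idx k" for a b
  proof -
    have "(\<Sum>c\<in>idx k. Tmom \<mu> k a c * cnj (Tmom \<mu> k b c))
        = (\<Sum>c\<in>idx k. \<integral>W. Tmom \<mu> k a c * cnj (tens_entry k W b c) \<partial>\<mu>)"
      by (simp add: Tmom_def)
    also have "\<dots> = (\<integral>W. (\<Sum>c\<in>idx k. Tmom \<mu> k a c * cnj (tens_entry k W b c)) \<partial>\<mu>)"
      by (rule integral_sum_good[OF um, symmetric]) (auto intro!: goodf_mult goodf_const goodf_te goodf_cnj)
    also have "\<dots> = (\<integral>W. Tmom \<mu> k a b \<partial>\<mu>)"
    proof (rule integral_cong_AE)
      show "(\<lambda>W. \<Sum>c\<in>idx k. Tmom \<mu> k a c * cnj (tens_entry k W b c)) \<in> borel_measurable \<mu>"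
        by (rule goodf_meas[OF umeasD(2)[OF um]]) (auto intro!: goodf_sum goodf_mult goodf_const goodf_te goodf_cnj)
      show "(\<lambda>W. Tmom \<mu> k a b) \<in> borel_measurable \<mu>" by simp
      show "AE W in \<mu>. (\<Sum>c\<in>idx k. Tmom \<mu> k a c * cnj (tens_entry k W b c)) = Tmom \<mu> k a b"
        using umeasD(3)[OF um]
      proof eventually_elim
        case (elim W)
        have "(\<Sum>c\<in>idx k. Tmom \<mu> k a c * cnj (tens_entry k W b c))
            = (\<Sum>c\<in>idx k. Tmom \<mu> k a c * tens_entry k (cadj W) c b)"
          by (simp add: te_cadj)
        also have "\<dots> = Tmom \<mu> k a b"
          by (rule P_right[OF h unitary_cadj[OF elim] a b])
        finally show ?case .
      qed
    qed
    also have "\<dots> = Tmom \<mu> k a b" by (simp add: prob_space)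
    finally show ?thesis .
  qed
  have "cnj (Tmom \<mu> k b a) = cnj (\<Sum>c\<in>idx k. Tmom \<mu> k b c * cnj (Tmom \<mu> k a c))"
    by (simp only: step[OF b a])
  also have "\<dots> = (\<Sum>c\<in>idx k. Tmom \<mu> k a c * cnj (Tmom \<mu> k b c))"
    by (simp add: cnj_sum mult.commute)
  also have "\<dots> = Tmom \<mu> k a b" by (rule step[OF a b])
  finally show ?thesis .
qed

lemma Tnu_formula:
  fixes C :: "'n::finite list \<Rightarrow> 'n list \<Rightarrow> complex"
  assumes um: "umeas \<nu>" and u: "unitary U"
    and rep: "\<forall>U. unitary U \<longrightarrow> \<Phi> U = ell k C U" and cont: "continuous_on UNIV \<Phi>"
  shows "Tnu \<nu> \<Phi> U = (\<Sum>a\<in>idx k. \<Sum>b\<in>idx k. C a b * (\<Sum>c\<in>idx k. cnj (Tmom \<nu> k c a) * tens_entry k U c b))"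
proof -
  have "Tnu \<nu> \<Phi> U = (\<integral>W. ell k C (cadj W ** U) \<partial>\<nu>)"
    unfolding Tnu_def
  proof (rule integral_cong_AE)
    show "(\<lambda>W. \<Phi> (cadj W ** U)) \<in> borel_measurable \<nu>"
      by (intro meas_borel[OF umeasD(2)[OF um]] borel_measurable_continuous_onI
          continuous_on_compose2[OF cont] cont_mmult cont_cadj continuous_on_id continuous_on_const) auto
    show "(\<lambda>W. ell k C (cadj W ** U)) \<in> borel_measurable \<nu>"
      by (intro meas_borel[OF umeasD(2)[OF um]] borel_measurable_continuous_onI
          continuous_on_compose2[OF goodf_ell[unfolded goodf_def, THEN conjunct1]] cont_mmult cont_cadj
          continuous_on_id continuous_on_const) auto
    show "AE W in \<nu>. \<Phi> (cadj W ** U) = ell k C (cadj W ** U)"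
      using umeasD(3)[OF um] by eventually_elim (use rep u unitary_mult unitary_cadj in blast)
  qed
  also have "\<dots> = (\<integral>W. (\<Sum>a\<in>idx k. \<Sum>b\<in>idx k. C a b * (\<Sum>c\<in>idx k. cnj (tens_entry k W c a) * tens_entry k U c b)) \<partial>\<nu>)"
    by (simp add: ell_cadj_mult)
  also have "\<dots> = (\<Sum>a\<in>idx k. \<integral>W. (\<Sum>b\<in>idx k. C a b * (\<Sum>c\<in>idx k. cnj (tens_entry k W c a) * tens_entry k U c b)) \<partial>\<nu>)"
    by (rule integral_sum_good[OF um]) (auto intro!: goodf_sum goodf_mult goodf_const goodf_te goodf_cnj)
  also have "\<dots> = (\<Sum>a\<in>idx k. \<Sum>b\<in>idx k. C a b * (\<Sum>c\<in>idx k. \<integral>W. cnj (tens_entry k W c a) * tens_entry k U c b \<partial>\<nu>))"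
  proof (rule sum.cong[OF refl])
    fix a :: "'n list" assume "a \<in> idx k"
    have "(\<integral>W. (\<Sum>b\<in>idx k. C a b * (\<Sum>c\<in>idx k. cnj (tens_entry k W c a) * tens_entry k U c b)) \<partial>\<nu>)
        = (\<Sum>b\<in>idx k. \<integral>W. C a b * (\<Sum>c\<in>idx k. cnj (tens_entry k W c a) * tens_entry k U c b) \<partial>\<nu>)"
      by (rule integral_sum_good[OF um]) (auto intro!: goodf_sum goodf_mult goodf_const goodf_te goodf_cnj)
    also have "\<dots> = (\<Sum>b\<in>idx k. C a b * (\<Sum>c\<in>idx k. \<integral>W. cnj (tens_entry k W c a) * tens_entry k U c b \<partial>\<nu>))"
      by (rule sum.cong[OF refl], simp only: integral_mult_right_zero,
          subst integral_sum_good[OF um]) (auto intro!: goodf_mult goodf_const goodf_te goodf_cnj)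
    finally show "(\<integral>W. (\<Sum>b\<in>idx k. C a b * (\<Sum>c\<in>idx k. cnj (tens_entry k W c a) * tens_entry k U c b)) \<partial>\<nu>)
        = (\<Sum>b\<in>idx k. C a b * (\<Sum>c\<in>idx k. \<integral>W. cnj (tens_entry k W c a) * tens_entry k U c b \<partial>\<nu>))" .
  qed
  also have "\<dots> = (\<Sum>a\<in>idx k. \<Sum>b\<in>idx k. C a b * (\<Sum>c\<in>idx k. cnj (Tmom \<nu> k c a) * tens_entry k U c b))"
    by (simp add: Tmom_def)
  finally show ?thesis .
qed

definition sip :: "(complex^'n^'n) measure \<Rightarrow> nat \<Rightarrow> ('n list \<Rightarrow> 'n list \<Rightarrow> complex) \<Rightarrow> ('n list \<Rightarrow> 'n list \<Rightarrow> complex) \<Rightarrow> complex" where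
  "sip M k C D = (\<integral>U. cnj (ell k C U) * ell k D U \<partial>M)"

definition sq :: "(complex^'n^'n) measure \<Rightarrow> nat \<Rightarrow> ('n list \<Rightarrow> 'n list \<Rightarrow> complex) \<Rightarrow> real" where
  "sq M k C = (\<integral>U. (cmod (ell k C U))\<^sup>2 \<partial>M)"

lemma goodf_sqcm: "goodf f \<Longrightarrow> goodf (\<lambda>U. (cmod (f U))\<^sup>2)"
  unfolding power2_eq_square by (intro goodf_mult goodf_cmod)

lemma sq_nonneg: "0 \<le> sq M k C"
  unfolding sq_def by (rule Bochner_Integration.integral_nonneg) simp

lemma sip_self:
  assumes "umeas M"
  shows "sip M k C C = complex_of_real (sq M k C)"
proof -
  have "sip M k C C = (\<integral>U. complex_of_real ((cmod (ell k C U))\<^sup>2) \<partial>M)"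
    unfolding sip_def by (simp add: mcnj mult.commute)
  also have "\<dots> = complex_of_real (sq M k C)"
    unfolding sq_def by (rule integral_of_real) (intro goodf_integrable[OF assms] goodf_sqcm goodf_ell)
  finally show ?thesis .
qed

lemma sip_cnj: "cnj (sip M k C D) = sip M k D C"
proof -
  have "sip M k D C = (\<integral>U. cnj (cnj (ell k C U) * ell k D U) \<partial>M)"
    unfolding sip_def by (simp add: mult.commute)
  also have "\<dots> = cnj (sip M k C D)"
    unfolding sip_def by (rule Bochner_Integration.integral_cnj)
  finally show ?thesis by simp
qed

lemma cs_integral:
  fixes f g :: "'a \<Rightarrow> real"
  assumes i1: "integrable M (\<lambda>x. (f x)\<^sup>2)" and i2: "integrable M (\<lambda>x. (g x)\<^sup>2)"
    and i3: "integrable M (\<lambda>x. f x * g x)"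
  shows "(\<integral>x. f x * g x \<partial>M) \<le> sqrt (\<integral>x. (f x)\<^sup>2 \<partial>M) * sqrt (\<integral>x. (g x)\<^sup>2 \<partial>M)"
proof -
  define A where "A = (\<integral>x. (f x)\<^sup>2 \<partial>M)"
  define B where "B = (\<integral>x. (g x)\<^sup>2 \<partial>M)"
  define I where "I = (\<integral>x. f x * g x \<partial>M)"
  have A0: "A \<ge> 0" unfolding A_def by (rule Bochner_Integration.integral_nonneg) simp
  have B0: "B \<ge> 0" unfolding B_def by (rule Bochner_Integration.integral_nonneg) simp
  have key: "2 * I \<le> t * A + B / t" if t: "t > 0" for t
  proof -
    have pw: "2 * (f x * g x) \<le> t * (f x)\<^sup>2 + (g x)\<^sup>2 / t" for x
    proof -
      have "0 \<le> (t * f x - g x)\<^sup>2" by simp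
      then have "2 * t * (f x * g x) \<le> t * (t * (f x)\<^sup>2) + (g x)\<^sup>2"
        by (simp add: power2_eq_square algebra_simps)
      then have "2 * (f x * g x) \<le> (t * (t * (f x)\<^sup>2) + (g x)\<^sup>2) / t"
        using t by (simp add: pos_le_divide_eq mult_ac)
      then show ?thesis using t by (simp add: add_divide_distrib)
    qed
    have "2 * I = (\<integral>x. 2 * (f x * g x) \<partial>M)" unfolding I_def by simp
    also have "\<dots> \<le> (\<integral>x. t * (f x)\<^sup>2 + (g x)\<^sup>2 / t \<partial>M)"
      by (rule integral_mono) (use i1 i2 i3 pw in auto)
    also have "\<dots> = t * A + B / t"
      unfolding A_def B_def using i1 i2 by simp
    finally show ?thesis .
  qed
  consider "A = 0" | "B = 0" | "A > 0 \<and> B > 0" using A0 B0 by linarith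
  then have "I \<le> sqrt A * sqrt B"
  proof cases
    case 1
    show ?thesis
    proof (rule ccontr)
      assume "\<not> I \<le> sqrt A * sqrt B"
      then have Ip: "I > 0" using 1 by simp
      define t where "t = (B + 1) / I"
      have tp: "t > 0" using Ip B0 by (simp add: t_def)
      have "2 * I \<le> B / t" using key[OF tp] 1 by simp
      also have "\<dots> = B * I / (B + 1)" using Ip B0 by (simp add: t_def)
      also have "\<dots> < I" using Ip B0 by (simp add: divide_less_eq)
      finally show False using Ip by simp
    qed
  next
    case 2
    show ?thesis
    proof (rule ccontr)
      assume "\<not> I \<le> sqrt A * sqrt B"
      then have Ip: "I > 0" using 2 by simp
      define t where "t = I / (A + 1)"
      have tp: "t > 0" using Ip A0 by (simp add: t_def)
      have "2 * I \<le> t * A" using key[OF tp] 2 by simp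
      also have "\<dots> = I * A / (A + 1)" by (simp add: t_def)
      also have "\<dots> < I" using Ip A0 by (simp add: divide_less_eq)
      finally show False using Ip by simp
    qed
  next
    case 3
    define t where "t = sqrt B / sqrt A"
    have tp: "t > 0" using 3 by (simp add: t_def)
    have sA: "sqrt A > 0" "sqrt B > 0" using 3 by auto
    have eA: "A = sqrt A * sqrt A" and eB: "B = sqrt B * sqrt B" using A0 B0 by simp_all
    have "t * A = sqrt A * sqrt B" unfolding t_def using sA by (subst eA) (simp add: field_simps)
    moreover have "B / t = sqrt A * sqrt B" unfolding t_def using sA by (subst eB) (simp add: field_simps)
    ultimately show ?thesis using key[OF tp] by simp
  qed
  then show ?thesis unfolding A_def B_def I_def .
qed

lemma sip_cs:
  assumes um: "umeas M"
  shows "cmod (sip M k C D) \<le> sqrt (sq M k C) * sqrt (sq M k D)"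
proof -
  have "cmod (sip M k C D) \<le> (\<integral>U. cmod (cnj (ell k C U) * ell k D U) \<partial>M)"
    unfolding sip_def by (rule integral_norm_bound)
  also have "\<dots> = (\<integral>U. cmod (ell k C U) * cmod (ell k D U) \<partial>M)"
    by (simp add: norm_mult)
  also have "\<dots> \<le> sqrt (\<integral>U. (cmod (ell k C U))\<^sup>2 \<partial>M) * sqrt (\<integral>U. (cmod (ell k D U))\<^sup>2 \<partial>M)"
    by (rule cs_integral) (intro goodf_integrable[OF um] goodf_sqcm goodf_mult goodf_cmod goodf_ell)+
  finally show ?thesis unfolding sq_def .
qed

lemma ell_mm2:
  "ell k (mm (idx k) Z C) U = (\<Sum>a\<in>idx k. \<Sum>c\<in>idx k. Z a c * (\<Sum>b\<in>idx k. C c b * tens_entry k U a b))"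
proof -
  let ?I = "idx k :: 'n list set"
  have "ell k (mm ?I Z C) U = (\<Sum>a\<in>?I. \<Sum>b\<in>?I. \<Sum>c\<in>?I. Z a c * C c b * tens_entry k U a b)"
    unfolding ell_def mm_def by (simp add: sum_distrib_right)
  also have "\<dots> = (\<Sum>a\<in>?I. \<Sum>c\<in>?I. \<Sum>b\<in>?I. Z a c * C c b * tens_entry k U a b)"
    by (rule sum.cong[OF refl]) (rule sum.swap)
  also have "\<dots> = (\<Sum>a\<in>?I. \<Sum>c\<in>?I. Z a c * (\<Sum>b\<in>?I. C c b * tens_entry k U a b))"
    by (simp add: sum_distrib_left mult_ac)
  finally show ?thesis .
qed

lemma ell_conj_te: "ell k (mm (idx k) (\<lambda>a c. cnj (tens_entry k W a c)) C) U = ell k C (cadj W ** U)"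
  unfolding ell_mm ell_cadj_mult ..

lemma ell_te_transp: "ell k (mm (idx k) (\<lambda>a c. tens_entry k W c a) D) U = ell k D (W ** U)"
  unfolding ell_mm by (simp only: ell_def te_mult)

lemma cnj_dsum: "cnj (\<Sum>a\<in>A. \<Sum>c\<in>B. Z a c * S a c) * (E::complex) = (\<Sum>a\<in>A. \<Sum>c\<in>B. cnj (Z a c) * (cnj (S a c) * E))"
  by (simp add: cnj_sum sum_distrib_right sum_distrib_left mult_ac)

lemma dsum_mult: "(E::complex) * (\<Sum>a\<in>A. \<Sum>c\<in>B. Z a c * S a c) = (\<Sum>a\<in>A. \<Sum>c\<in>B. Z a c * (E * S a c))"
  by (simp add: sum_distrib_left mult_ac)

lemma sip_invariant:
  fixes W :: "complex^'n::finite^'n"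
  assumes h: "haar \<mu>" and w: "unitary W"
  shows "sip \<mu> k (mm (idx k) (\<lambda>a c. cnj (tens_entry k W a c)) C) D
       = sip \<mu> k C (mm (idx k) (\<lambda>a c. tens_entry k W c a) D)"
proof -
  have um: "umeas \<mu>" by (rule haar_umeas[OF h])
  have d: "distr \<mu> borel (\<lambda>U. W ** U) = \<mu>" using h w by (simp add: haar_def)
  define h where "h V = cnj (ell k C (cadj W ** V)) * ell k D V" for V
  have hm: "h \<in> borel_measurable borel"
    unfolding h_def
    by (intro borel_measurable_continuous_onI continuous_on_mult continuous_on_cnj
        continuous_on_compose2[OF goodf_ell[unfolded goodf_def, THEN conjunct1]]
        cont_ml goodf_ell[unfolded goodf_def, THEN conjunct1]) auto
  have "sip \<mu> k (mm (idx k) (\<lambda>a c. cnj (tens_entry k W a c)) C) D = (\<integral>U. h U \<partial>\<mu>)"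
    unfolding sip_def ell_conj_te h_def ..
  also have "\<dots> = (\<integral>U. h U \<partial>(distr \<mu> borel (\<lambda>U. W ** U)))" by (simp only: d)
  also have "\<dots> = (\<integral>U. h (W ** U) \<partial>\<mu>)"
    by (rule integral_distr[OF mult_meas(2)[OF umeasD(2)[OF um]] hm])
  also have "\<dots> = sip \<mu> k C (mm (idx k) (\<lambda>a c. tens_entry k W c a) D)"
    unfolding sip_def ell_te_transp h_def unitary_cancel[OF w] ..
  finally show ?thesis .
qed

definition Zf :: "(complex^'n^'n) measure \<Rightarrow> nat \<Rightarrow> ('n list \<Rightarrow> 'n list \<Rightarrow> complex) \<Rightarrow> ('n list \<Rightarrow> 'n list \<Rightarrow> complex) \<Rightarrow> 'n list \<Rightarrow> 'n list \<Rightarrow> complex" where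
  "Zf M k C D a c = (\<integral>U. cnj (\<Sum>b\<in>idx k. C c b * tens_entry k U a b) * ell k D U \<partial>M)"

definition Zg :: "(complex^'n^'n) measure \<Rightarrow> nat \<Rightarrow> ('n list \<Rightarrow> 'n list \<Rightarrow> complex) \<Rightarrow> ('n list \<Rightarrow> 'n list \<Rightarrow> complex) \<Rightarrow> 'n list \<Rightarrow> 'n list \<Rightarrow> complex" where
  "Zg M k C D a c = (\<integral>U. cnj (ell k C U) * (\<Sum>b\<in>idx k. D c b * tens_entry k U a b) \<partial>M)"

lemma goodf_inner: fixes C :: "'n::finite list \<Rightarrow> 'n list \<Rightarrow> complex" shows "goodf (\<lambda>U. \<Sum>b\<in>idx k. C c b * tens_entry k U a b)"
  by (intro goodf_sum goodf_mult goodf_const goodf_te) auto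

lemma sip_mm_left:
  fixes C D :: "'n::finite list \<Rightarrow> 'n list \<Rightarrow> complex"
  assumes um: "umeas M"
  shows "sip M k (mm (idx k) Z C) D = (\<Sum>a\<in>idx k. \<Sum>c\<in>idx k. cnj (Z a c) * Zf M k C D a c)"
proof -
  have "sip M k (mm (idx k) Z C) D
      = (\<integral>U. (\<Sum>a\<in>idx k. \<Sum>c\<in>idx k. cnj (Z a c) * (cnj (\<Sum>b\<in>idx k. C c b * tens_entry k U a b) * ell k D U)) \<partial>M)"
    unfolding sip_def ell_mm2 cnj_dsum ..
  also have "\<dots> = (\<Sum>a\<in>idx k. \<integral>U. (\<Sum>c\<in>idx k. cnj (Z a c) * (cnj (\<Sum>b\<in>idx k. C c b * tens_entry k U a b) * ell k D U)) \<partial>M)"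
    by (rule integral_sum_good[OF um]) (auto intro!: goodf_sum goodf_mult goodf_const goodf_cnj goodf_te goodf_ell)
  also have "\<dots> = (\<Sum>a\<in>idx k. \<Sum>c\<in>idx k. \<integral>U. cnj (Z a c) * (cnj (\<Sum>b\<in>idx k. C c b * tens_entry k U a b) * ell k D U) \<partial>M)"
    by (rule sum.cong[OF refl], rule integral_sum_good[OF um])
       (auto intro!: goodf_sum goodf_mult goodf_const goodf_cnj goodf_te goodf_ell)
  also have "\<dots> = (\<Sum>a\<in>idx k. \<Sum>c\<in>idx k. cnj (Z a c) * Zf M k C D a c)"
    by (simp add: Zf_def)
  finally show ?thesis .
qed

lemma sip_mm_right:
  fixes C D :: "'n::finite list \<Rightarrow> 'n list \<Rightarrow> complex"
  assumes um: "umeas M"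
  shows "sip M k C (mm (idx k) Z D) = (\<Sum>a\<in>idx k. \<Sum>c\<in>idx k. Z a c * Zg M k C D a c)"
proof -
  have "sip M k C (mm (idx k) Z D)
      = (\<integral>U. (\<Sum>a\<in>idx k. \<Sum>c\<in>idx k. Z a c * (cnj (ell k C U) * (\<Sum>b\<in>idx k. D c b * tens_entry k U a b))) \<partial>M)"
    unfolding sip_def ell_mm2 dsum_mult ..
  also have "\<dots> = (\<Sum>a\<in>idx k. \<integral>U. (\<Sum>c\<in>idx k. Z a c * (cnj (ell k C U) * (\<Sum>b\<in>idx k. D c b * tens_entry k U a b))) \<partial>M)"
    by (rule integral_sum_good[OF um]) (auto intro!: goodf_sum goodf_mult goodf_const goodf_cnj goodf_te goodf_ell)
  also have "\<dots> = (\<Sum>a\<in>idx k. \<Sum>c\<in>idx k. \<integral>U. Z a c * (cnj (ell k C U) * (\<Sum>b\<in>idx k. D c b * tens_entry k U a b)) \<partial>M)"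
    by (rule sum.cong[OF refl], rule integral_sum_good[OF um])
       (auto intro!: goodf_sum goodf_mult goodf_const goodf_cnj goodf_te goodf_ell)
  also have "\<dots> = (\<Sum>a\<in>idx k. \<Sum>c\<in>idx k. Z a c * Zg M k C D a c)"
    by (simp add: Zg_def)
  finally show ?thesis .
qed

lemma int_double_sum:
  fixes F :: "'n::finite list \<Rightarrow> 'n list \<Rightarrow> complex^'n^'n \<Rightarrow> complex"
  assumes um: "umeas M" and g: "\<And>a c. goodf (F a c)"
  shows "(\<integral>W. (\<Sum>a\<in>idx k. \<Sum>c\<in>idx k. F a c W * K a c) \<partial>M) = (\<Sum>a\<in>idx k. \<Sum>c\<in>idx k. (\<integral>W. F a c W \<partial>M) * K a c)"
proof -
  have "(\<integral>W. (\<Sum>a\<in>idx k. \<Sum>c\<in>idx k. F a c W * K a c) \<partial>M) = (\<Sum>a\<in>idx k. \<integral>W. (\<Sum>c\<in>idx k. F a c W * K a c) \<partial>M)"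
    by (rule integral_sum_good[OF um]) (auto intro!: goodf_sum goodf_mult goodf_const g)
  also have "\<dots> = (\<Sum>a\<in>idx k. \<Sum>c\<in>idx k. \<integral>W. F a c W * K a c \<partial>M)"
    by (rule sum.cong[OF refl], rule integral_sum_good[OF um]) (auto intro!: goodf_mult goodf_const g)
  also have "\<dots> = (\<Sum>a\<in>idx k. \<Sum>c\<in>idx k. (\<integral>W. F a c W \<partial>M) * K a c)"
    by simp
  finally show ?thesis .
qed

lemma moment_swap:
  fixes C D :: "'n::finite list \<Rightarrow> 'n list \<Rightarrow> complex"
  assumes h: "haar \<mu>" and ur: "umeas \<rho>"
  shows "(\<Sum>a\<in>idx k. \<Sum>c\<in>idx k. Tmom \<rho> k a c * Zf \<mu> k C D a c)
       = (\<Sum>a\<in>idx k. \<Sum>c\<in>idx k. Tmom \<rho> k c a * Zg \<mu> k C D a c)"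
proof -
  have um: "umeas \<mu>" by (rule haar_umeas[OF h])
  have "(\<Sum>a\<in>idx k. \<Sum>c\<in>idx k. Tmom \<rho> k a c * Zf \<mu> k C D a c)
      = (\<integral>W. (\<Sum>a\<in>idx k. \<Sum>c\<in>idx k. tens_entry k W a c * Zf \<mu> k C D a c) \<partial>\<rho>)"
    unfolding Tmom_def by (rule int_double_sum[OF ur goodf_te, symmetric])
  also have "\<dots> = (\<integral>W. (\<Sum>a\<in>idx k. \<Sum>c\<in>idx k. tens_entry k W c a * Zg \<mu> k C D a c) \<partial>\<rho>)"
  proof (rule integral_cong_AE)
    show "(\<lambda>W. \<Sum>a\<in>idx k. \<Sum>c\<in>idx k. tens_entry k W a c * Zf \<mu> k C D a c) \<in> borel_measurable \<rho>"
      by (rule goodf_meas[OF umeasD(2)[OF ur]]) (auto intro!: goodf_sum goodf_mult goodf_const goodf_te)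
    show "(\<lambda>W. \<Sum>a\<in>idx k. \<Sum>c\<in>idx k. tens_entry k W c a * Zg \<mu> k C D a c) \<in> borel_measurable \<rho>"
      by (rule goodf_meas[OF umeasD(2)[OF ur]]) (auto intro!: goodf_sum goodf_mult goodf_const goodf_te)
    show "AE W in \<rho>. (\<Sum>a\<in>idx k. \<Sum>c\<in>idx k. tens_entry k W a c * Zf \<mu> k C D a c)
        = (\<Sum>a\<in>idx k. \<Sum>c\<in>idx k. tens_entry k W c a * Zg \<mu> k C D a c)"
      using umeasD(3)[OF ur]
    proof eventually_elim
      case (elim W)
      have "(\<Sum>a\<in>idx k. \<Sum>c\<in>idx k. tens_entry k W a c * Zf \<mu> k C D a c)
          = sip \<mu> k (mm (idx k) (\<lambda>a c. cnj (tens_entry k W a c)) C) D"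
        by (simp add: sip_mm_left[OF um])
      also have "\<dots> = sip \<mu> k C (mm (idx k) (\<lambda>a c. tens_entry k W c a) D)"
        by (rule sip_invariant[OF h elim])
      also have "\<dots> = (\<Sum>a\<in>idx k. \<Sum>c\<in>idx k. tens_entry k W c a * Zg \<mu> k C D a c)"
        by (simp add: sip_mm_right[OF um])
      finally show ?case .
    qed
  qed
  also have "\<dots> = (\<Sum>a\<in>idx k. \<Sum>c\<in>idx k. Tmom \<rho> k c a * Zg \<mu> k C D a c)"
    unfolding Tmom_def by (rule int_double_sum[OF ur goodf_te])
  finally show ?thesis .
qed

definition Ym :: "(complex^'n^'n) measure \<Rightarrow> (complex^'n^'n) measure \<Rightarrow> nat \<Rightarrow> 'n list \<Rightarrow> 'n list \<Rightarrow> complex" where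
  "Ym \<mu> \<nu> k a c = cnj (Tmom \<nu> k a c - Tmom \<mu> k a c)"

definition Ym' :: "(complex^'n^'n) measure \<Rightarrow> (complex^'n^'n) measure \<Rightarrow> nat \<Rightarrow> 'n list \<Rightarrow> 'n list \<Rightarrow> complex" where
  "Ym' \<mu> \<nu> k a c = Tmom \<nu> k c a - Tmom \<mu> k c a"

lemma adj1:
  fixes C D :: "'n::finite list \<Rightarrow> 'n list \<Rightarrow> complex"
  assumes h: "haar \<mu>" and un: "umeas \<nu>"
  shows "sip \<mu> k (mm (idx k) (Ym \<mu> \<nu> k) C) D = sip \<mu> k C (mm (idx k) (Ym' \<mu> \<nu> k) D)"
proof -
  have um: "umeas \<mu>" by (rule haar_umeas[OF h])
  have "sip \<mu> k (mm (idx k) (Ym \<mu> \<nu> k) C) D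
      = (\<Sum>a\<in>idx k. \<Sum>c\<in>idx k. Tmom \<nu> k a c * Zf \<mu> k C D a c) - (\<Sum>a\<in>idx k. \<Sum>c\<in>idx k. Tmom \<mu> k a c * Zf \<mu> k C D a c)"
    by (simp add: sip_mm_left[OF um] Ym_def left_diff_distrib sum_subtractf)
  also have "\<dots> = (\<Sum>a\<in>idx k. \<Sum>c\<in>idx k. Tmom \<nu> k c a * Zg \<mu> k C D a c) - (\<Sum>a\<in>idx k. \<Sum>c\<in>idx k. Tmom \<mu> k c a * Zg \<mu> k C D a c)"
    by (simp only: moment_swap[OF h un] moment_swap[OF h um])
  also have "\<dots> = sip \<mu> k C (mm (idx k) (Ym' \<mu> \<nu> k) D)"
    by (simp add: sip_mm_right[OF um] Ym'_def left_diff_distrib sum_subtractf)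
  finally show ?thesis .
qed

lemma adj2:
  fixes C D :: "'n::finite list \<Rightarrow> 'n list \<Rightarrow> complex"
  assumes h: "haar \<mu>" and un: "umeas \<nu>"
  shows "sip \<mu> k (mm (idx k) (Ym' \<mu> \<nu> k) C) D = sip \<mu> k C (mm (idx k) (Ym \<mu> \<nu> k) D)"
proof -
  have "sip \<mu> k (mm (idx k) (Ym' \<mu> \<nu> k) C) D = cnj (sip \<mu> k D (mm (idx k) (Ym' \<mu> \<nu> k) C))"
    by (simp add: sip_cnj)
  also have "\<dots> = cnj (sip \<mu> k (mm (idx k) (Ym \<mu> \<nu> k) D) C)"
    by (simp add: adj1[OF h un])
  also have "\<dots> = sip \<mu> k C (mm (idx k) (Ym \<mu> \<nu> k) D)"
    by (simp add: sip_cnj)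
  finally show ?thesis .
qed

lemma sumsq_le: "(\<Sum>p\<in>A. cmod (X (fst p) (snd p)))\<^sup>2 \<le> (\<Sum>p\<in>A. (cmod (X (fst p) (snd p)))\<^sup>2) * real (card A)"
  by (rule sum_squared_le_sum_of_squares)

lemma ell_bound:
  fixes X :: "'n::finite list \<Rightarrow> 'n list \<Rightarrow> complex"
  assumes u: "unitary U"
  shows "(cmod (ell k X U))\<^sup>2 \<le> real (card (idx k \<times> idx k :: ('n list \<times> 'n list) set)) * hs (idx k) X"
proof -
  let ?I = "idx k :: 'n list set"
  have "cmod (ell k X U) \<le> (\<Sum>a\<in>?I. \<Sum>b\<in>?I. cmod (X a b))"
  proof -
    have "cmod (ell k X U) \<le> (\<Sum>a\<in>?I. cmod (\<Sum>b\<in>?I. X a b * tens_entry k U a b))"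
      unfolding ell_def by (rule norm_sum)
    also have "\<dots> \<le> (\<Sum>a\<in>?I. \<Sum>b\<in>?I. cmod (X a b * tens_entry k U a b))"
      by (intro sum_mono norm_sum)
    also have "\<dots> \<le> (\<Sum>a\<in>?I. \<Sum>b\<in>?I. cmod (X a b))"
      by (intro sum_mono) (auto simp: norm_mult intro!: mult_left_le te_bound[OF u])
    finally show ?thesis .
  qed
  also have "\<dots> = (\<Sum>p\<in>?I \<times> ?I. cmod (X (fst p) (snd p)))"
    by (simp add: sum.cartesian_product case_prod_unfold)
  finally have le: "cmod (ell k X U) \<le> (\<Sum>p\<in>?I \<times> ?I. cmod (X (fst p) (snd p)))" .
  have "(cmod (ell k X U))\<^sup>2 \<le> (\<Sum>p\<in>?I \<times> ?I. cmod (X (fst p) (snd p)))\<^sup>2"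
    by (rule power_mono[OF le]) simp
  also have "\<dots> \<le> (\<Sum>p\<in>?I \<times> ?I. (cmod (X (fst p) (snd p)))\<^sup>2) * real (card (?I \<times> ?I))"
    by (rule sumsq_le)
  also have "(\<Sum>p\<in>?I \<times> ?I. (cmod (X (fst p) (snd p)))\<^sup>2) = hs ?I X"
    by (simp add: hs_def sum.cartesian_product case_prod_unfold)
  finally show ?thesis by (simp add: mult.commute)
qed

lemma sq_bound:
  fixes X :: "'n::finite list \<Rightarrow> 'n list \<Rightarrow> complex"
  assumes um: "umeas M"
  shows "sq M k X \<le> real (card (idx k \<times> idx k :: ('n list \<times> 'n list) set)) * hs (idx k) X"
proof -
  interpret prob_space M using umeasD[OF um] by simp
  show ?thesis unfolding sq_def
  proof (rule integral_le_const)
    show "integrable M (\<lambda>U. (cmod (ell k X U))\<^sup>2)"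
      by (intro goodf_integrable[OF um] goodf_sqcm goodf_ell)
    show "AE U in M. (cmod (ell k X U))\<^sup>2 \<le> real (card (idx k \<times> idx k :: ('n list \<times> 'n list) set)) * hs (idx k) X"
      using umeasD(3)[OF um] by eventually_elim (rule ell_bound)
  qed
qed

fun useq :: "'i set \<Rightarrow> ('i \<Rightarrow> 'i \<Rightarrow> complex) \<Rightarrow> ('i \<Rightarrow> 'i \<Rightarrow> complex) \<Rightarrow> ('i \<Rightarrow> 'i \<Rightarrow> complex) \<Rightarrow> nat \<Rightarrow> ('i \<Rightarrow> 'i \<Rightarrow> complex)" where
  "useq S Y Y' C 0 = C"
| "useq S Y Y' C (Suc n) = mm S (if even n then Y else Y') (useq S Y Y' C n)"

lemma main_ineq:
  fixes C :: "'n::finite list \<Rightarrow> 'n list \<Rightarrow> complex"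
  assumes h: "haar \<mu>" and un: "umeas \<nu>"
  shows "sq \<mu> k (mm (idx k) (Ym \<mu> \<nu> k) C) \<le> (opnorm (idx k) (\<lambda>I J. Tmom \<nu> k I J - Tmom \<mu> k I J))\<^sup>2 * sq \<mu> k C"
proof -
  have um: "umeas \<mu>" by (rule haar_umeas[OF h])
  let ?I = "idx k :: 'n list set"
  define \<Delta> where "\<Delta> = (\<lambda>I J. Tmom \<nu> k I J - Tmom \<mu> k I J)"
  define op where "op = opnorm ?I \<Delta>"
  have op0: "0 \<le> op" unfolding op_def by (rule opnorm_nonneg) simp
  define A where "A n = (if even n then Ym \<mu> \<nu> k else Ym' \<mu> \<nu> k)" for n :: nat
  define u where "u = useq ?I (Ym \<mu> \<nu> k) (Ym' \<mu> \<nu> k) C"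
  have u0: "u 0 = C" and uS: "u (Suc n) = mm ?I (A n) (u n)" for n
    by (simp_all add: u_def A_def)
  define s where "s n = sq \<mu> k (u n)" for n
  have adj: "sip \<mu> k (mm ?I (A n) X) Z = sip \<mu> k X (mm ?I (A (Suc n)) Z)" for n X Z
    by (cases "even n") (simp_all add: A_def adj1[OF h un] adj2[OF h un])
  have nn: "0 \<le> s n" for n unfolding s_def by (rule sq_nonneg)
  have lc: "(s (Suc n))\<^sup>2 \<le> s n * s (Suc (Suc n))" for n
  proof -
    have "complex_of_real (s (Suc n)) = sip \<mu> k (u (Suc n)) (u (Suc n))"
      unfolding s_def by (rule sip_self[OF um, symmetric])
    also have "\<dots> = sip \<mu> k (mm ?I (A n) (u n)) (u (Suc n))" by (simp only: uS)
    also have "\<dots> = sip \<mu> k (u n) (mm ?I (A (Suc n)) (u (Suc n)))" by (rule adj)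
    also have "\<dots> = sip \<mu> k (u n) (u (Suc (Suc n)))" by (simp only: uS)
    finally have e: "complex_of_real (s (Suc n)) = sip \<mu> k (u n) (u (Suc (Suc n)))" .
    have cs: "cmod (sip \<mu> k (u n) (u (Suc (Suc n)))) \<le> sqrt (s n) * sqrt (s (Suc (Suc n)))"
      unfolding s_def by (rule sip_cs[OF um])
    have "s (Suc n) = cmod (sip \<mu> k (u n) (u (Suc (Suc n))))"
      using e nn[of "Suc n"] by (metis abs_of_nonneg norm_of_real)
    with cs have "s (Suc n) \<le> sqrt (s n) * sqrt (s (Suc (Suc n)))" by linarith
    then have "(s (Suc n))\<^sup>2 \<le> (sqrt (s n) * sqrt (s (Suc (Suc n))))\<^sup>2"
      by (rule power_mono) (rule nn)
    also have "\<dots> = s n * s (Suc (Suc n))" using nn[of n] nn[of "Suc (Suc n)"]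
      by (simp add: power_mult_distrib)
    finally show ?thesis .
  qed
  have stepY: "(\<Sum>a\<in>?I. (cmod (\<Sum>c\<in>?I. A n a c * x c))\<^sup>2) \<le> op\<^sup>2 * (\<Sum>c\<in>?I. (cmod (x c))\<^sup>2)" for n x
  proof (cases "even n")
    case True
    have "(\<Sum>a\<in>?I. (cmod (\<Sum>c\<in>?I. A n a c * x c))\<^sup>2) = (\<Sum>a\<in>?I. (cmod (\<Sum>c\<in>?I. \<Delta> a c * cnj (x c)))\<^sup>2)"
    proof (rule sum.cong[OF refl])
      fix a
      have "(\<Sum>c\<in>?I. A n a c * x c) = cnj (\<Sum>c\<in>?I. \<Delta> a c * cnj (x c))"
        using True by (simp add: A_def Ym_def \<Delta>_def cnj_sum)
      then show "(cmod (\<Sum>c\<in>?I. A n a c * x c))\<^sup>2 = (cmod (\<Sum>c\<in>?I. \<Delta> a c * cnj (x c)))\<^sup>2"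
        unfolding complex_mod_cnj by (simp only: complex_mod_cnj)
    qed
    also have "\<dots> \<le> op\<^sup>2 * (\<Sum>c\<in>?I. (cmod (cnj (x c)))\<^sup>2)"
      unfolding op_def by (rule opnorm_le) simp
    finally show ?thesis by simp
  next
    case False
    have "(\<Sum>a\<in>?I. (cmod (\<Sum>c\<in>?I. A n a c * x c))\<^sup>2) = (\<Sum>a\<in>?I. (cmod (\<Sum>c\<in>?I. \<Delta> c a * x c))\<^sup>2)"
      using False by (simp add: A_def Ym'_def \<Delta>_def)
    also have "\<dots> \<le> op\<^sup>2 * (\<Sum>c\<in>?I. (cmod (x c))\<^sup>2)"
      unfolding op_def by (rule opnorm_le_transp) simp
    finally show ?thesis .
  qed
  have hsb: "hs ?I (u n) \<le> (op\<^sup>2) ^ n * hs ?I C" for n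
  proof (induction n)
    case 0 then show ?case by (simp add: u0)
  next
    case (Suc n)
    have "hs ?I (u (Suc n)) \<le> op\<^sup>2 * hs ?I (u n)"
      unfolding uS by (rule hs_mm) (rule stepY)
    also have "\<dots> \<le> op\<^sup>2 * ((op\<^sup>2) ^ n * hs ?I C)"
      by (rule mult_left_mono[OF Suc]) simp
    finally show ?case by (simp add: mult_ac)
  qed
  define N where "N = real (card (?I \<times> ?I))"
  have bd: "s n \<le> (N * hs ?I C) * (op\<^sup>2) ^ n" for n
  proof -
    have "s n \<le> N * hs ?I (u n)" unfolding s_def N_def by (rule sq_bound[OF um])
    also have "\<dots> \<le> N * ((op\<^sup>2) ^ n * hs ?I C)"
      by (rule mult_left_mono[OF hsb]) (simp add: N_def)
    finally show ?thesis by (simp add: mult_ac)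
  qed
  have "s 1 \<le> op\<^sup>2 * s 0"
    by (rule power_trick[OF nn lc bd]) simp
  then show ?thesis by (simp add: s_def u0 uS A_def op_def \<Delta>_def)
qed

lemma bl_mv: "bounded_linear (\<lambda>x::complex^'n::finite. A *v x)"
  using matrix_vector_mul_linear[of A] linear_conv_bounded_linear by (simp add: eta_contract_eq)

lemma norm_mv_le:
  fixes A :: "complex^'n::finite^'n"
  shows "norm (A *v x) \<le> (real CARD('n) * real CARD('n) * norm A) * norm x"
proof -
  have c: "cmod ((A *v x) $ i) \<le> real CARD('n) * (norm A * norm x)" for i
  proof -
    have "cmod ((A *v x) $ i) = cmod (\<Sum>j\<in>UNIV. A $ i $ j * x $ j)"
      by (simp add: matrix_vector_mult_def)
    also have "\<dots> \<le> (\<Sum>j\<in>UNIV. cmod (A $ i $ j) * cmod (x $ j))"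
      by (rule order_trans[OF norm_sum]) (simp add: norm_mult)
    also have "\<dots> \<le> (\<Sum>j\<in>(UNIV::'n set). norm A * norm x)"
    proof (rule sum_mono)
      fix j
      have "cmod (A $ i $ j) \<le> norm A" using Finite_Cartesian_Product.norm_nth_le[where x="A $ i" and i=j] Finite_Cartesian_Product.norm_nth_le[where x=A and i=i] by linarith
      then show "cmod (A $ i $ j) * cmod (x $ j) \<le> norm A * norm x"
        by (intro mult_mono) (auto simp: Finite_Cartesian_Product.norm_nth_le)
    qed
    also have "\<dots> = real CARD('n) * (norm A * norm x)" by simp
    finally show ?thesis .
  qed
  have "norm (A *v x) \<le> (\<Sum>i\<in>UNIV. cmod ((A *v x) $ i))"
    unfolding norm_vec_def by (rule L2_set_le_sum) simp
  also have "\<dots> \<le> (\<Sum>i\<in>(UNIV::'n set). real CARD('n) * (norm A * norm x))"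
    by (rule sum_mono) (simp add: c)
  also have "\<dots> = (real CARD('n) * real CARD('n) * norm A) * norm x" by (simp add: mult_ac)
  finally show ?thesis .
qed

lemma onorm_mv_le:
  fixes A :: "complex^'n::finite^'n"
  shows "onorm (\<lambda>x. A *v x) \<le> real CARD('n) * real CARD('n) * norm A"
  by (rule onorm_le) (rule norm_mv_le)

definition gph :: "complex^'n^'n \<Rightarrow> real \<Rightarrow> complex^'n^'n \<Rightarrow> real" where
  "gph V \<phi> U = onorm (\<lambda>x::complex^'n. U *v x - exp (\<i> * of_real \<phi>) *s (V *v x))"

lemma gph_eq:
  fixes V :: "complex^'n::finite^'n"
  shows "gph V \<phi> U = onorm (\<lambda>x. (U - (\<chi> i j. exp (\<i> * of_real \<phi>) * V $ i $ j)) *v x)"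
proof -
  have "(\<lambda>x::complex^'n. U *v x - exp (\<i> * of_real \<phi>) *s (V *v x))
      = (\<lambda>x. (U - (\<chi> i j. exp (\<i> * of_real \<phi>) * V $ i $ j)) *v x)"
    by (rule ext) (simp add: vec_eq_iff matrix_vector_mult_def
        sum_distrib_left mult_ac right_diff_distrib sum_subtractf)
  then show ?thesis unfolding gph_def by simp
qed

lemma gph_nonneg: "0 \<le> gph V \<phi> (U::complex^'n::finite^'n)"
  unfolding gph_eq by (rule onorm_pos_le[OF bl_mv])

lemma gph_lip:
  fixes V :: "complex^'n::finite^'n"
  shows "\<bar>gph V \<phi> U - gph V \<phi> U'\<bar> \<le> real CARD('n) * real CARD('n) * norm (U - U')"
proof -
  define E :: "complex^'n^'n" where "E = (\<chi> i j. exp (\<i> * of_real \<phi>) * V $ i $ j)"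
  have tri: "onorm (\<lambda>x. A *v x) \<le> onorm (\<lambda>x. B *v x) + onorm (\<lambda>x. (A - B) *v x)"
    for A B :: "complex^'n^'n"
  proof -
    have "(\<lambda>x. A *v x) = (\<lambda>x. B *v x + (A - B) *v x)"
      by (rule ext) (simp add: matrix_vector_mult_diff_rdistrib)
    then have "onorm (\<lambda>x. A *v x) = onorm (\<lambda>x. B *v x + (A - B) *v x)" by simp
    also have "\<dots> \<le> onorm (\<lambda>x. B *v x) + onorm (\<lambda>x. (A - B) *v x)"
      by (rule onorm_triangle[OF bl_mv bl_mv])
    finally show ?thesis .
  qed
  have e1: "(U - E) - (U' - E) = U - U'" by simp
  have e2: "(U' - E) - (U - E) = -(U - U')" by simp
  have "gph V \<phi> U \<le> gph V \<phi> U' + real CARD('n) * real CARD('n) * norm (U - U')"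
    unfolding gph_eq E_def[symmetric]
    using tri[of "U - E" "U' - E"] onorm_mv_le[of "U - U'"] unfolding e1 by linarith
  moreover have "gph V \<phi> U' \<le> gph V \<phi> U + real CARD('n) * real CARD('n) * norm (U - U')"
    unfolding gph_eq E_def[symmetric]
    using tri[of "U' - E" "U - E"] onorm_mv_le[of "-(U - U')"] unfolding e2 norm_minus_cancel by linarith
  ultimately show ?thesis by linarith
qed

lemma gph_cont:
  fixes V :: "complex^'n::finite^'n"
  shows "continuous_on UNIV (gph V \<phi>)"
proof (rule lipschitz_on_continuous_on)
  show "(real CARD('n) * real CARD('n))-lipschitz_on UNIV (gph V \<phi>)"
    by (rule lipschitz_onI) (auto simp: dist_real_def dist_norm intro: gph_lip)
qed

lemma Dist_gph: "Dist U V = Inf (range (\<lambda>\<phi>. gph V \<phi> U))"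
  unfolding Dist_def gph_def ..

lemma Dist_le_iff:
  fixes V :: "complex^'n::finite^'n"
  shows "Dist U V \<le> \<epsilon> \<longleftrightarrow> (\<forall>n::nat. \<exists>\<phi>. gph V \<phi> U < \<epsilon> + inverse (real (Suc n)))"
proof -
  let ?S = "range (\<lambda>\<phi>. gph V \<phi> U)"
  have ne: "?S \<noteq> {}" by simp
  have bb: "bdd_below ?S" by (rule bdd_belowI[of _ 0]) (auto intro: gph_nonneg)
  show ?thesis
  proof
    assume le: "Dist U V \<le> \<epsilon>"
    show "\<forall>n::nat. \<exists>\<phi>. gph V \<phi> U < \<epsilon> + inverse (real (Suc n))"
    proof
      fix n :: nat
      have "Inf ?S < \<epsilon> + inverse (real (Suc n))" using le unfolding Dist_gph
        by (smt (verit) inverse_positive_iff_positive of_nat_0_less_iff zero_less_Suc)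
      then show "\<exists>\<phi>. gph V \<phi> U < \<epsilon> + inverse (real (Suc n))"
        using cInf_less_iff[OF ne bb] by auto
    qed
  next
    assume all: "\<forall>n::nat. \<exists>\<phi>. gph V \<phi> U < \<epsilon> + inverse (real (Suc n))"
    show "Dist U V \<le> \<epsilon>"
    proof (rule ccontr)
      assume "\<not> Dist U V \<le> \<epsilon>"
      then have "Inf ?S - \<epsilon> > 0" unfolding Dist_gph by simp
      then obtain n where n: "inverse (real (Suc n)) < Inf ?S - \<epsilon>" using reals_Archimedean by blast
      obtain \<phi> where "gph V \<phi> U < \<epsilon> + inverse (real (Suc n))" using all by blast
      moreover have "Inf ?S \<le> gph V \<phi> U" by (rule cInf_lower[OF _ bb]) simp
      ultimately show False using n by simp
    qed
  qed
qed

lemma unitary_closed: "closed {U::complex^'n::finite^'n. unitary U}"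
proof -
  have c1: "continuous_on UNIV (\<lambda>U::complex^'n^'n. U ** cadj U)"
    by (rule cont_mmult[OF continuous_on_id cont_cadj[OF continuous_on_id]])
  have c2: "continuous_on UNIV (\<lambda>U::complex^'n^'n. cadj U ** U)"
    by (rule cont_mmult[OF cont_cadj[OF continuous_on_id] continuous_on_id])
  have "{U::complex^'n^'n. unitary U} = {U. U ** cadj U = mat 1} \<inter> {U. cadj U ** U = mat 1}"
    unfolding unitary_def by auto
  also have "closed \<dots>"
    by (rule closed_Int; rule closed_Collect_eq[OF _ continuous_on_const]) (rule c1, rule c2)
  finally show ?thesis .
qed

lemma ballD_borel:
  fixes V :: "complex^'n::finite^'n"
  shows "ballD V \<epsilon> \<in> sets borel"
proof -
  have eq: "ballD V \<epsilon> = {U. unitary U} \<inter> (\<Inter>n::nat. \<Union>\<phi>. {U. gph V \<phi> U < \<epsilon> + inverse (real (Suc n))})"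
    unfolding ballD_def by (simp add: Dist_le_iff set_eq_iff)
  have op: "open {U. gph V \<phi> U < c}" for \<phi> c
    by (rule open_Collect_less[OF gph_cont continuous_on_const])
  have "(\<Union>\<phi>. {U. gph V \<phi> U < \<epsilon> + inverse (real (Suc n))}) \<in> sets borel" for n
    by (rule borel_open, rule open_UN) (simp add: op)
  then have "(\<Inter>n::nat. \<Union>\<phi>. {U. gph V \<phi> U < \<epsilon> + inverse (real (Suc n))}) \<in> sets borel"
    by (intro sets.countable_INT') auto
  moreover have "{U. unitary U} \<in> sets (borel :: (complex^'n^'n) measure)"
    by (rule borel_closed[OF unitary_closed])
  ultimately show ?thesis unfolding eq by (rule sets.Int[rotated])
qed

lemma Tnu_meas:
  fixes \<Phi> :: "complex^'n::finite^'n \<Rightarrow> complex"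
  assumes un: "umeas \<nu>" and sm: "sets \<mu> = sets borel" and cont: "continuous_on UNIV \<Phi>"
  shows "(\<lambda>U. Tnu \<nu> \<Phi> U) \<in> borel_measurable \<mu>"
proof -
  interpret prob_space \<nu> using umeasD[OF un] by simp
  have c2: "continuous_on UNIV (\<lambda>p::(complex^'n^'n) \<times> (complex^'n^'n). \<Phi> (cadj (snd p) ** fst p))"
    by (rule continuous_on_compose2[OF cont cont_mmult[OF cont_cadj[OF continuous_on_snd[OF continuous_on_id]]
          continuous_on_fst[OF continuous_on_id]]]) simp
  have m1: "(\<lambda>p::(complex^'n^'n) \<times> (complex^'n^'n). \<Phi> (cadj (snd p) ** fst p)) \<in> borel_measurable (borel \<Otimes>\<^sub>M borel)"
    unfolding borel_prod by (rule borel_measurable_continuous_onI[OF c2])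
  have ms: "(\<mu> \<Otimes>\<^sub>M \<nu>) \<rightarrow>\<^sub>M borel = (borel \<Otimes>\<^sub>M borel) \<rightarrow>\<^sub>M (borel :: complex measure)"
    by (rule measurable_cong_sets[OF sets_pair_measure_cong[OF sm umeasD(2)[OF un]] refl])
  have fe: "(\<lambda>(U, W). \<Phi> (cadj W ** U)) = (\<lambda>p::(complex^'n^'n) \<times> (complex^'n^'n). \<Phi> (cadj (snd p) ** fst p))"
    by (rule ext) (simp add: split_beta)
  have "(\<lambda>(U, W). \<Phi> (cadj W ** U)) \<in> borel_measurable (\<mu> \<Otimes>\<^sub>M \<nu>)"
    unfolding fe ms by (rule m1)
  then show ?thesis unfolding Tnu_def by (rule borel_measurable_lebesgue_integral)
qed

theorem lemma3:
  fixes \<mu> \<nu> :: "(complex^'n^'n) measure" and \<Phi> :: "complex^'n^'n \<Rightarrow> complex"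
    and V :: "complex^'n^'n" and \<epsilon> \<delta> :: real and k :: nat
  assumes "haar \<mu>"
    and "prob_space \<nu>" and "sets \<nu> = sets borel" and "AE U in \<nu>. unitary U"
    and "approx_expander \<mu> \<nu> \<delta> k"
    and "unitary V" and "0 \<le> \<epsilon>" and "\<epsilon> \<le> 2"
    and "\<Phi> \<in> Hk k" and "(\<integral>U. \<Phi> U \<partial>\<mu>) = 1"
  shows "cmod ((LINT U : ballD V \<epsilon> | \<mu>. Tnu \<nu> \<Phi> U) - of_real (measure \<mu> (ballD V \<epsilon>)))
           \<le> \<delta> * sqrt (measure \<mu> (ballD V \<epsilon>)) * L2norm \<mu> \<Phi>"
proof -
  have h: "haar \<mu>" by (rule assms(1))
  have um: "umeas \<mu>" by (rule haar_umeas[OF h])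
  have un: "umeas \<nu>" using assms(2-4) by (simp add: umeas_def)
  have smu: "sets \<mu> = sets borel" by (rule umeasD(2)[OF um])
  have aeu: "AE U in \<mu>. unitary U" by (rule umeasD(3)[OF um])
  interpret P: prob_space \<mu> by (rule umeasD(1)[OF um])
  let ?I = "idx k :: 'n list set"
  obtain C where rep: "\<forall>U. unitary U \<longrightarrow> \<Phi> U = ell k C U" using Hk_rep[OF assms(9)] by blast
  have cont: "continuous_on UNIV \<Phi>" by (rule Hk_cont[OF assms(9)])
  have \<Phi>m: "\<Phi> \<in> borel_measurable \<mu>" by (rule meas_borel[OF smu borel_measurable_continuous_onI[OF cont]])
  define Y where "Y = Ym \<mu> \<nu> k"
  define E where "E U = ell k (mm ?I Y C) U" for U
  have one: "(\<Sum>a\<in>?I. \<Sum>b\<in>?I. C a b * Tmom \<mu> k a b) = 1"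
  proof -
    have ae: "AE U in \<mu>. \<Phi> U = ell k C U" using aeu by eventually_elim (use rep in blast)
    have "(\<integral>U. \<Phi> U \<partial>\<mu>) = (\<integral>U. ell k C U \<partial>\<mu>)"
      by (rule integral_cong_AE[OF \<Phi>m goodf_meas[OF smu goodf_ell] ae])
    then show ?thesis using assms(10) int_ell[OF um] by simp
  qed
  have Gmu: "(\<Sum>a\<in>?I. \<Sum>b\<in>?I. C a b * (\<Sum>c\<in>?I. cnj (Tmom \<mu> k c a) * tens_entry k U c b)) = 1"
    if u: "unitary U" for U
  proof -
    have inner: "(\<Sum>c\<in>?I. cnj (Tmom \<mu> k c a) * tens_entry k U c b) = Tmom \<mu> k a b"
      if a: "a \<in> ?I" and b: "b \<in> ?I" for a b
    proof -
      have "(\<Sum>c\<in>?I. cnj (Tmom \<mu> k c a) * tens_entry k U c b) = (\<Sum>c\<in>?I. Tmom \<mu> k a c * tens_entry k U c b)"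
        by (rule sum.cong[OF refl]) (simp add: P_sa[OF h a])
      also have "\<dots> = Tmom \<mu> k a b" by (rule P_right[OF h u a b])
      finally show ?thesis .
    qed
    have "(\<Sum>a\<in>?I. \<Sum>b\<in>?I. C a b * (\<Sum>c\<in>?I. cnj (Tmom \<mu> k c a) * tens_entry k U c b))
        = (\<Sum>a\<in>?I. \<Sum>b\<in>?I. C a b * Tmom \<mu> k a b)"
      by (intro sum.cong refl) (simp add: inner)
    then show ?thesis using one by simp
  qed
  have Tdiff: "Tnu \<nu> \<Phi> U = 1 + E U" if u: "unitary U" for U
  proof -
    have "E U = (\<Sum>a\<in>?I. \<Sum>b\<in>?I. C a b * (\<Sum>c\<in>?I. cnj (Tmom \<nu> k c a) * tens_entry k U c b))
              - (\<Sum>a\<in>?I. \<Sum>b\<in>?I. C a b * (\<Sum>c\<in>?I. cnj (Tmom \<mu> k c a) * tens_entry k U c b))"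
      unfolding E_def ell_mm Y_def Ym_def
      by (simp add: right_diff_distrib left_diff_distrib sum_subtractf)
    also have "\<dots> = Tnu \<nu> \<Phi> U - 1"
      by (simp only: Gmu[OF u] Tnu_formula[OF un u rep cont])
    finally show ?thesis by simp
  qed
  define op where "op = opnorm ?I (\<lambda>I J. Tmom \<nu> k I J - Tmom \<mu> k I J)"
  have op0: "0 \<le> op" unfolding op_def by (rule opnorm_nonneg) simp
  have opd: "op \<le> \<delta>" using assms(5) unfolding op_def approx_expander_def .
  have ineq: "sq \<mu> k (mm ?I Y C) \<le> op\<^sup>2 * sq \<mu> k C"
    unfolding Y_def op_def by (rule main_ineq[OF h un])
  have sqC: "sq \<mu> k C = (\<integral>U. (cmod (\<Phi> U))\<^sup>2 \<partial>\<mu>)"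
  proof -
    have ae: "AE U in \<mu>. (cmod (ell k C U))\<^sup>2 = (cmod (\<Phi> U))\<^sup>2" using aeu by eventually_elim (use rep in simp)
    show ?thesis unfolding sq_def
      by (rule integral_cong_AE[OF goodf_meas[OF smu goodf_sqcm[OF goodf_ell]] _ ae])
         (rule meas_borel[OF smu borel_measurable_continuous_onI],
          intro continuous_on_power continuous_on_norm cont)
  qed
  have L2: "L2norm \<mu> \<Phi> = sqrt (sq \<mu> k C)" unfolding L2norm_def sqC ..
  define B where "B = ballD V \<epsilon>"
  have Bm: "B \<in> sets \<mu>" unfolding B_def smu by (rule ballD_borel)
  have Bfin: "emeasure \<mu> B < \<infinity>" using P.emeasure_finite[of B] by (simp add: less_top[symmetric])
  have spc: "space \<mu> = UNIV" using sets_eq_imp_space_eq[OF smu] by simp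
  have Tm: "(\<lambda>U. Tnu \<nu> \<Phi> U) \<in> borel_measurable \<mu>" by (rule Tnu_meas[OF un smu cont])
  have Eg: "goodf E" unfolding E_def by (rule goodf_ell)
  have Em: "E \<in> borel_measurable \<mu>" by (rule goodf_meas[OF smu Eg])
  have Ei: "integrable \<mu> E" by (rule goodf_integrable[OF um Eg])
  have s1: "(LINT U : B | \<mu>. Tnu \<nu> \<Phi> U) = (\<integral>U. indicator B U *\<^sub>R (1 + E U) \<partial>\<mu>)"
    unfolding set_lebesgue_integral_def
  proof (rule integral_cong_AE)
    show "(\<lambda>U. indicator B U *\<^sub>R Tnu \<nu> \<Phi> U) \<in> borel_measurable \<mu>"
      by (intro borel_measurable_scaleR borel_measurable_indicator Bm Tm)
    show "(\<lambda>U. indicator B U *\<^sub>R (1 + E U)) \<in> borel_measurable \<mu>"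
      by (intro borel_measurable_scaleR borel_measurable_indicator borel_measurable_add Bm Em) simp
    show "AE U in \<mu>. indicator B U *\<^sub>R Tnu \<nu> \<Phi> U = indicator B U *\<^sub>R (1 + E U)"
      using aeu by eventually_elim (simp add: Tdiff)
  qed
  have s2: "(\<integral>U. indicator B U *\<^sub>R (1 + E U) \<partial>\<mu>)
      = (\<integral>U. indicator B U *\<^sub>R (1::complex) \<partial>\<mu>) + (\<integral>U. indicator B U *\<^sub>R E U \<partial>\<mu>)"
  proof -
    have "(\<integral>U. indicator B U *\<^sub>R (1 + E U) \<partial>\<mu>) = (\<integral>U. indicator B U *\<^sub>R (1::complex) + indicator B U *\<^sub>R E U \<partial>\<mu>)"
      by (simp add: scaleR_add_right)
    also have "\<dots> = (\<integral>U. indicator B U *\<^sub>R (1::complex) \<partial>\<mu>) + (\<integral>U. indicator B U *\<^sub>R E U \<partial>\<mu>)"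
      by (rule Bochner_Integration.integral_add)
         (intro integrable_mult_indicator Bm P.integrable_const Ei)+
    finally show ?thesis .
  qed
  have s3: "(\<integral>U. indicator B U *\<^sub>R (1::complex) \<partial>\<mu>) = of_real (measure \<mu> B)"
    using has_bochner_integral_integral_eq[OF has_bochner_integral_indicator[OF Bm Bfin, of "1::complex"]]
    by (simp add: scaleR_conv_of_real)
  have lhs: "cmod ((LINT U : B | \<mu>. Tnu \<nu> \<Phi> U) - of_real (measure \<mu> B)) = cmod (\<integral>U. indicator B U *\<^sub>R E U \<partial>\<mu>)"
    unfolding s1 s2 s3 by simp
  have i1: "integrable \<mu> (\<lambda>U. (indicator B U :: real)\<^sup>2)"
  proof -
    have "(\<lambda>U. (indicator B U :: real)\<^sup>2) = indicator B" by (rule ext) (simp add: indicator_def)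
    then show ?thesis using integrable_real_indicator[OF Bm Bfin] by simp
  qed
  have i2: "integrable \<mu> (\<lambda>U. (cmod (E U))\<^sup>2)" by (rule goodf_integrable[OF um goodf_sqcm[OF Eg]])
  have i3: "integrable \<mu> (\<lambda>U. indicator B U * cmod (E U))"
    using integrable_mult_indicator[OF Bm goodf_integrable[OF um goodf_cmod[OF Eg]]] by simp
  have intB: "(\<integral>U. (indicator B U :: real)\<^sup>2 \<partial>\<mu>) = measure \<mu> B"
  proof -
    have "(\<lambda>U. (indicator B U :: real)\<^sup>2) = indicator B" by (rule ext) (simp add: indicator_def)
    then show ?thesis by (simp add: spc)
  qed
  have "cmod (\<integral>U. indicator B U *\<^sub>R E U \<partial>\<mu>) \<le> (\<integral>U. cmod (indicator B U *\<^sub>R E U) \<partial>\<mu>)"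
    by (rule integral_norm_bound)
  also have "\<dots> = (\<integral>U. indicator B U * cmod (E U) \<partial>\<mu>)"
    by (simp add: indicator_def)
  also have "\<dots> \<le> sqrt (\<integral>U. (indicator B U :: real)\<^sup>2 \<partial>\<mu>) * sqrt (\<integral>U. (cmod (E U))\<^sup>2 \<partial>\<mu>)"
    by (rule cs_integral[OF i1 i2 i3])
  also have "(\<integral>U. (cmod (E U))\<^sup>2 \<partial>\<mu>) = sq \<mu> k (mm ?I Y C)" unfolding sq_def E_def ..
  also have "sqrt (sq \<mu> k (mm ?I Y C)) \<le> op * sqrt (sq \<mu> k C)"
  proof -
    have "sqrt (sq \<mu> k (mm ?I Y C)) \<le> sqrt (op\<^sup>2 * sq \<mu> k C)" by (rule real_sqrt_le_mono[OF ineq])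
    also have "\<dots> = op * sqrt (sq \<mu> k C)" using op0 by (simp add: real_sqrt_mult)
    finally show ?thesis .
  qed
  then have "sqrt (\<integral>U. (indicator B U :: real)\<^sup>2 \<partial>\<mu>) * sqrt (sq \<mu> k (mm ?I Y C))
      \<le> sqrt (measure \<mu> B) * (op * sqrt (sq \<mu> k C))"
    unfolding intB by (rule mult_left_mono) simp
  also have "\<dots> \<le> sqrt (measure \<mu> B) * (\<delta> * sqrt (sq \<mu> k C))"
    by (intro mult_left_mono mult_right_mono opd) (simp_all add: sq_nonneg)
  also have "\<dots> = \<delta> * sqrt (measure \<mu> B) * L2norm \<mu> \<Phi>" unfolding L2 by (simp add: mult_ac)
  finally show ?thesis unfolding lhs[unfolded B_def] B_def .
qed

end
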